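(* Let $c:I\to\mathbb{L}^3$ be a regular timelike curve such that $c''(t)$ is spacelike for all $t\in I$. Then there exists a Born-Infeld soliton general surface containing $c$ as a geodesic, where by a geodesic is meant a curve on the surface whose principal normal agrees with the surface normal in $\mathbb{L}^3$.
   Context: $\mathbb{L}^3$ denotes $\mathbb{R}^3$ with the metric $ds^2=dx^2+dy^2-dz^2$. A function $\psi$ on an open set of the $(u,v)$-plane is a Born-Infeld soliton (in the variables $u,v$) if $(1-\psi_v^2)\psi_{uu}+2\psi_u\psi_v\psi_{uv}-(1+\psi_u^2)\psi_{vv}=0$. A surface is a Born-Infeld soliton general surface if it is locally of the form $(\psi(y,z),y,z)$, $(x,\psi(x,z),z)$ or $(x,y,\psi(x,y))$ where $\psi$ solves the Born-Infeld equation (in the respective pair of variables). *)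

theory Defs
  imports "HOL-Analysis.Analysis"
begin

type_synonym R3 = "real \<times> real \<times> real"

definition lor :: "R3 \<Rightarrow> R3 \<Rightarrow> real" where
  "lor p q = fst p * fst q + fst (snd p) * fst (snd q) - snd (snd p) * snd (snd q)"

definition pu :: "(real \<times> real \<Rightarrow> real) \<Rightarrow> real \<times> real \<Rightarrow> real" where
  "pu f p = deriv (\<lambda>s. f (s, snd p)) (fst p)"

definition pv :: "(real \<times> real \<Rightarrow> real) \<Rightarrow> real \<times> real \<Rightarrow> real" where
  "pv f p = deriv (\<lambda>s. f (fst p, s)) (snd p)"

definition has_partials_on :: "(real \<times> real) set \<Rightarrow> (real \<times> real \<Rightarrow> real) \<Rightarrow> bool" where
  "has_partials_on U f \<longleftrightarrow>
     (\<forall>p\<in>U. (\<lambda>s. f (s, snd p)) differentiable (at (fst p)) \<and>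
             (\<lambda>s. f (fst p, s)) differentiable (at (snd p)))"

definition C2_on :: "(real \<times> real) set \<Rightarrow> (real \<times> real \<Rightarrow> real) \<Rightarrow> bool" where
  "C2_on U f \<longleftrightarrow> continuous_on U f \<and>
     has_partials_on U f \<and> has_partials_on U (pu f) \<and> has_partials_on U (pv f) \<and>
     continuous_on U (pu f) \<and> continuous_on U (pv f) \<and>
     continuous_on U (pu (pu f)) \<and> continuous_on U (pv (pu f)) \<and>
     continuous_on U (pu (pv f)) \<and> continuous_on U (pv (pv f))"

definition born_infeld :: "(real \<times> real) set \<Rightarrow> (real \<times> real \<Rightarrow> real) \<Rightarrow> bool" where
  "born_infeld U \<psi> \<longleftrightarrow> open U \<and> C2_on U \<psi> \<and>
     (\<forall>p\<in>U. (1 - (pv \<psi> p)\<^sup>2) * pu (pu \<psi>) p + 2 * pu \<psi> p * pv \<psi> p * pv (pu \<psi>) p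
              - (1 + (pu \<psi> p)\<^sup>2) * pv (pv \<psi>) p = 0)"

definition graph_pt :: "nat \<Rightarrow> (real \<times> real \<Rightarrow> real) \<Rightarrow> real \<times> real \<Rightarrow> R3" where
  "graph_pt k \<psi> p =
     (if k = 1 then (\<psi> p, fst p, snd p)
      else if k = 2 then (fst p, \<psi> p, snd p)
      else (fst p, snd p, \<psi> p))"

text \<open>A Lorentzian normal vector of the graph (Lorentz-orthogonal to its tangent plane).\<close>
definition graph_normal :: "nat \<Rightarrow> (real \<times> real \<Rightarrow> real) \<Rightarrow> real \<times> real \<Rightarrow> R3" where
  "graph_normal k \<psi> p =
     (if k = 1 then (1, - pu \<psi> p, pv \<psi> p)
      else if k = 2 then (- pu \<psi> p, 1, pv \<psi> p)
      else (pu \<psi> p, pv \<psi> p, 1))"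

definition BI_chart :: "R3 set \<Rightarrow> R3 set \<Rightarrow> nat \<Rightarrow> (real \<times> real) set \<Rightarrow> (real \<times> real \<Rightarrow> real) \<Rightarrow> bool" where
  "BI_chart S V k U \<psi> \<longleftrightarrow> open V \<and> k \<in> {1,2,3} \<and> born_infeld U \<psi> \<and>
     S \<inter> V = graph_pt k \<psi> ` U"

definition BI_general_surface :: "R3 set \<Rightarrow> bool" where
  "BI_general_surface S \<longleftrightarrow>
     (\<forall>p\<in>S. \<exists>V k U \<psi>. p \<in> V \<and> BI_chart S V k U \<psi>)"

definition smooth_curve :: "real set \<Rightarrow> (real \<Rightarrow> R3) \<Rightarrow> bool" where
  "smooth_curve I c \<longleftrightarrow> (\<exists>D. D 0 = c \<and>
     (\<forall>n. \<forall>t\<in>I. (D n has_vector_derivative D (Suc n) t) (at t)))"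

definition vel :: "(real \<Rightarrow> R3) \<Rightarrow> real \<Rightarrow> R3" where
  "vel c t = vector_derivative c (at t)"

definition acc :: "(real \<Rightarrow> R3) \<Rightarrow> real \<Rightarrow> R3" where
  "acc c t = vector_derivative (vel c) (at t)"

text \<open>(Non-normalized) principal normal: component of c'' Lorentz-orthogonal to c'.\<close>
definition prin_normal :: "(real \<Rightarrow> R3) \<Rightarrow> real \<Rightarrow> R3" where
  "prin_normal c t = acc c t - (lor (acc c t) (vel c t) / lor (vel c t) (vel c t)) *\<^sub>R vel c t"

definition geodesic_on :: "R3 set \<Rightarrow> real set \<Rightarrow> (real \<Rightarrow> R3) \<Rightarrow> bool" where
  "geodesic_on S I c \<longleftrightarrow> (\<forall>t\<in>I. c t \<in> S \<and>
     (\<forall>V k U \<psi> q. BI_chart S V k U \<psi> \<longrightarrow> c t \<in> V \<longrightarrow> q \<in> U \<longrightarrow> graph_pt k \<psi> q = c t \<longrightarrow>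
        (\<exists>a::real. prin_normal c t = a *\<^sub>R graph_normal k \<psi> q)))"

end

theory Submission
  imports Defs
begin

lemma bi_alg:
  fixes g1 g2 p1 p2 r1 r2 A1 A2 B1 B2 :: real
  assumes d: "p1*r2 - p2*r1 \<noteq> 0" and p2: "p2 \<noteq> 0" and r2: "r2 \<noteq> 0"
    and Qp: "(g1*p1+g2*p2)^2 + p1^2 - p2^2 = 0" and Qr: "(g1*r1+g2*r2)^2 + r1^2 - r2^2 = 0"
    and R1: "A2*p1 + B2*p2 = 0" and R2: "A1*r1 + B1*r2 = 0"
  shows "(1 - g2^2) * ((A1*r2 - A2*p2)/(p1*r2 - p2*r1))
          + 2*g1*g2*((A2*p1 - A1*r1)/(p1*r2 - p2*r1))
          - (1+g1^2)*((B2*p1 - B1*r1)/(p1*r2 - p2*r1)) = 0"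
proof -
  define E where "E = (1 - g2^2) * (A1*r2 - A2*p2) + 2*g1*g2*(A2*p1 - A1*r1) - (1+g1^2)*(B2*p1 - B1*r1)"
  have Qp': "(1+g1^2)*p1^2 + 2*g1*g2*p1*p2 + (g2^2-1)*p2^2 = 0" using Qp by (simp add: power2_eq_square algebra_simps)
  have Qr': "(1+g1^2)*r1^2 + 2*g1*g2*r1*r2 + (g2^2-1)*r2^2 = 0" using Qr by (simp add: power2_eq_square algebra_simps)
  have "p2*r2*E = r2*(A2*((1+g1^2)*p1^2 + 2*g1*g2*p1*p2 + (g2^2-1)*p2^2) - (1+g1^2)*p1*(A2*p1 + B2*p2))
     + p2*(-A1*((1+g1^2)*r1^2 + 2*g1*g2*r1*r2 + (g2^2-1)*r2^2) + (1+g1^2)*r1*(A1*r1 + B1*r2))"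
    unfolding E_def by (simp add: power2_eq_square algebra_simps)
  also have "\<dots> = 0" using Qp' Qr' R1 R2 by simp
  finally have "E = 0" using p2 r2 by simp
  have gen: "\<And>x y z A B C D::real. x*(A/D) + y*(B/D) - z*(C/D) = (x*A+y*B-z*C)/D"
    by (simp add: add_divide_distrib diff_divide_distrib)
  show ?thesis unfolding gen using \<open>E = 0\<close> unfolding E_def by simp
qed

definition crossL :: "R3 \<Rightarrow> R3 \<Rightarrow> R3" where
  "crossL p q = (fst (snd p) * snd (snd q) - snd (snd p) * fst (snd q),
                 snd (snd p) * fst q - fst p * snd (snd q),
                 -(fst p * fst (snd q) - fst (snd p) * fst q))"

lemma crossL_orth1: "lor (crossL p q) p = 0"
  by (simp add: crossL_def lor_def algebra_simps)
lemma crossL_orth2: "lor (crossL p q) q = 0"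
  by (simp add: crossL_def lor_def algebra_simps)
lemma crossL_norm: "lor (crossL p q) (crossL p q) = (lor p q)^2 - lor p p * lor q q"
  by (simp add: crossL_def lor_def power2_eq_square algebra_simps)

lemma lor_sym: "lor p q = lor q p" by (simp add: lor_def algebra_simps)
lemma lor_add1: "lor (p + q) r = lor p r + lor q r" by (simp add: lor_def algebra_simps)
lemma lor_add2: "lor r (p + q) = lor r p + lor r q" by (simp add: lor_def algebra_simps)
lemma lor_diff1: "lor (p - q) r = lor p r - lor q r" by (simp add: lor_def algebra_simps)
lemma lor_diff2: "lor r (p - q) = lor r p - lor r q" by (simp add: lor_def algebra_simps)
lemma lor_scale1: "lor (s *\<^sub>R p) r = s * lor p r" by (simp add: lor_def algebra_simps)
lemma lor_scale2: "lor r (s *\<^sub>R p) = s * lor r p" by (simp add: lor_def algebra_simps)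
lemmas lor_lin = lor_add1 lor_add2 lor_diff1 lor_diff2 lor_scale1 lor_scale2

lemma parallel_normal:
  fixes a b P n :: R3
  assumes ab: "lor a b \<noteq> 0" and aa: "lor a a = 0" and bb: "lor b b = 0"
    and Pa: "lor P a = 0" and Pb: "lor P b = 0"
    and na: "lor n a = 0" and nb: "lor n b = 0" and n0: "n \<noteq> 0"
  shows "\<exists>l::real. P = l *\<^sub>R n"
proof -
  obtain a1 a2 a3 where a: "a = (a1,a2,a3)" by (cases a) auto
  obtain b1 b2 b3 where b: "b = (b1,b2,b3)" by (cases b) auto
  obtain x1 x2 x3 where P: "P = (x1,x2,x3)" by (cases P) auto
  obtain y1 y2 y3 where n: "n = (y1,y2,y3)" by (cases n) auto
  define m1 where "m1 = a2*b3 - a3*b2"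
  define m2 where "m2 = a3*b1 - a1*b3"
  define m3 where "m3 = a1*b2 - a2*b1"
  have cc: "lor (crossL a b) (crossL a b) = m1^2+m2^2-m3^2"
    by (simp add: crossL_def lor_def a b m1_def m2_def m3_def power2_eq_square algebra_simps)
  have crn: "(lor a b)^2 = m1^2 + m2^2 - m3^2"
    using crossL_norm[of a b] aa bb cc by simp
  have mm: "m1^2 + m2^2 + m3^2 \<noteq> 0"
  proof
    assume "m1^2 + m2^2 + m3^2 = 0"
    moreover have "0 \<le> m1^2" "0 \<le> m2^2" "0 \<le> m3^2" by simp_all
    ultimately have "m1^2 = 0" "m2^2 = 0" "m3^2 = 0" by linarith+
    then have "m1 = 0" "m2 = 0" "m3 = 0" by simp_all
    then show False using crn ab by simp
  qed
  have ex: "\<And>z1 z2 z3. z1*a1 + z2*a2 - z3*a3 = 0 \<Longrightarrow> z1*b1 + z2*b2 - z3*b3 = 0 \<Longrightarrow>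
      (m1^2+m2^2+m3^2) * z1 = (z1*m1 + z2*m2 - z3*m3) * m1 \<and>
      (m1^2+m2^2+m3^2) * z2 = (z1*m1 + z2*m2 - z3*m3) * m2 \<and>
      (m1^2+m2^2+m3^2) * (-z3) = (z1*m1 + z2*m2 - z3*m3) * m3"
  proof -
    fix z1 z2 z3 :: real
    assume h1: "z1*a1 + z2*a2 - z3*a3 = 0" and h2: "z1*b1 + z2*b2 - z3*b3 = 0"
    have e1: "(m1^2+m2^2+m3^2) * z1 - (z1*m1 + z2*m2 - z3*m3) * m1
       = (z1*a1 + z2*a2 - z3*a3) * (b2*m3 - b3*m2) - (z1*b1 + z2*b2 - z3*b3) * (a2*m3 - a3*m2)"
      unfolding m1_def m2_def m3_def by (simp add: power2_eq_square algebra_simps)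
    have e2: "(m1^2+m2^2+m3^2) * z2 - (z1*m1 + z2*m2 - z3*m3) * m2
       = (z1*a1 + z2*a2 - z3*a3) * (b3*m1 - b1*m3) - (z1*b1 + z2*b2 - z3*b3) * (a3*m1 - a1*m3)"
      unfolding m1_def m2_def m3_def by (simp add: power2_eq_square algebra_simps)
    have e3: "(m1^2+m2^2+m3^2) * (-z3) - (z1*m1 + z2*m2 - z3*m3) * m3
       = (z1*a1 + z2*a2 - z3*a3) * (b1*m2 - b2*m1) - (z1*b1 + z2*b2 - z3*b3) * (a1*m2 - a2*m1)"
      unfolding m1_def m2_def m3_def by (simp add: power2_eq_square algebra_simps)
    show "(m1^2+m2^2+m3^2) * z1 = (z1*m1 + z2*m2 - z3*m3) * m1 \<and>
      (m1^2+m2^2+m3^2) * z2 = (z1*m1 + z2*m2 - z3*m3) * m2 \<and>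
      (m1^2+m2^2+m3^2) * (-z3) = (z1*m1 + z2*m2 - z3*m3) * m3"
      using e1 e2 e3 h1 h2 by simp
  qed
  define M where "M = m1^2+m2^2+m3^2"
  define kx where "kx = x1*m1 + x2*m2 - x3*m3"
  define ky where "ky = y1*m1 + y2*m2 - y3*m3"
  have X: "M*x1 = kx*m1" "M*x2 = kx*m2" "M*(-x3) = kx*m3"
    using ex[of x1 x2 x3] Pa Pb by (auto simp: P a b lor_def M_def kx_def)
  have Y: "M*y1 = ky*m1" "M*y2 = ky*m2" "M*(-y3) = ky*m3"
    using ex[of y1 y2 y3] na nb by (auto simp: n a b lor_def M_def ky_def)
  have M0: "M \<noteq> 0" using mm M_def by simp
  have ky0: "ky \<noteq> 0"
  proof
    assume "ky = 0"
    then have "y1 = 0" "y2 = 0" "y3 = 0" using Y M0 by auto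
    then show False using n0 n by (simp add: zero_prod_def)
  qed
  have "P = (kx/ky) *\<^sub>R n"
  proof -
    have x: "x1 = kx*m1/M" "x2 = kx*m2/M" "x3 = -(kx*m3/M)" using X M0 by (auto simp: field_simps)
    have y: "y1 = ky*m1/M" "y2 = ky*m2/M" "y3 = -(ky*m3/M)" using Y M0 by (auto simp: field_simps)
    have "x1 = kx/ky * y1" "x2 = kx/ky * y2" "x3 = kx/ky * y3" using x y ky0 by simp_all
    then show ?thesis by (simp add: P n)
  qed
  then show ?thesis by blast
qed

definition comp3 :: "nat \<Rightarrow> R3 \<Rightarrow> real" where
  "comp3 i q = (if i = 1 then fst q else if i = 2 then fst (snd q) else snd (snd q))"

lemma bl_fs: "bounded_linear (\<lambda>q::R3. fst (snd q))" by (rule bounded_linear_fst_comp[OF bounded_linear_snd])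
lemma bl_ss: "bounded_linear (\<lambda>q::R3. snd (snd q))" by (rule bounded_linear_snd_comp[OF bounded_linear_snd])
lemma bl_f: "bounded_linear (\<lambda>q::R3. fst q)" by (rule bounded_linear_fst)

lemma bounded_linear_comp3: "bounded_linear (comp3 i)"
proof -
  have "comp3 i = (if i = 1 then (\<lambda>q. fst q) else if i = 2 then (\<lambda>q. fst (snd q)) else (\<lambda>q. snd (snd q)))"
    by (auto simp: comp3_def)
  then show ?thesis using bl_fs bl_ss bl_f by simp
qed

lemma comp3_add: "comp3 i (p + q) = comp3 i p + comp3 i q" by (simp add: comp3_def)
lemma comp3_scale: "comp3 i (s *\<^sub>R p) = s * comp3 i p" by (simp add: comp3_def)

lemma comp3_hvd:
  "(f has_vector_derivative f') F \<Longrightarrow> ((\<lambda>t. comp3 i (f t)) has_real_derivative comp3 i f') F"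
  using bounded_linear.has_vector_derivative[OF bounded_linear_comp3, of f f' F i]
  by (simp add: has_real_derivative_iff_has_vector_derivative)

lemma hvd_cont_on:
  assumes "\<And>t. t \<in> I \<Longrightarrow> (f has_vector_derivative f' t) (at t)"
  shows "continuous_on I f"
proof (rule continuous_at_imp_continuous_on, rule ballI)
  fix t assume "t \<in> I"
  then show "isCont f t" using has_vector_derivative_continuous[OF assms] by blast
qed

lemma pos_nbhd:
  fixes f :: "real \<Rightarrow> real"
  assumes "continuous_on I f" "open I" "t0 \<in> I" "f t0 > 0"
  shows "\<exists>r>0. \<forall>s\<in>ball t0 r. f s > 0"
proof -
  have "open (I \<inter> f -` {0<..})"
    using continuous_on_open_vimage[OF assms(2)] assms(1) by (metis Int_commute open_greaterThan)
  moreover have "t0 \<in> I \<inter> f -` {0<..}" using assms by auto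
  ultimately obtain r where "r > 0" "ball t0 r \<subseteq> I \<inter> f -` {0<..}"
    by (meson open_contains_ball)
  then show ?thesis by auto
qed

lemma sign_const:
  fixes f :: "real \<Rightarrow> real"
  assumes "continuous_on I f" "is_interval I" "\<And>t. t \<in> I \<Longrightarrow> f t \<noteq> 0"
  shows "(\<forall>t\<in>I. f t > 0) \<or> (\<forall>t\<in>I. f t < 0)"
proof (rule ccontr)
  assume "\<not> ?thesis"
  then obtain s t where st: "s \<in> I" "t \<in> I" "\<not> f s > 0" "\<not> f t < 0" by blast
  then have fs: "f s \<le> 0" and ft: "0 \<le> f t" by simp_all
  have sub: "\<And>x y z. x \<in> I \<Longrightarrow> y \<in> I \<Longrightarrow> x \<le> z \<Longrightarrow> z \<le> y \<Longrightarrow> z \<in> I"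
    by (rule mem_is_interval_1_I[OF assms(2)])
  have sub2: "\<And>x y. x \<in> I \<Longrightarrow> y \<in> I \<Longrightarrow> {x..y} \<subseteq> I"
  proof
    fix x y z assume "x \<in> I" "y \<in> I" "z \<in> {x..y}"
    then show "z \<in> I" using sub[of x y z] by simp
  qed
  show False
  proof (cases "s \<le> t")
    case True
    have c: "continuous_on {s..t} f" using continuous_on_subset[OF assms(1) sub2[OF st(1,2)]] .
    obtain x where x: "s \<le> x" "x \<le> t" "f x = 0"
      using IVT'[of f s 0 t, OF fs ft True c] by blast
    have "x \<in> I" using sub[OF st(1,2) x(1,2)] .
    then show False using assms(3) x(3) by blast
  next
    case False
    then have le: "t \<le> s" by simp
    have c: "continuous_on {t..s} f" using continuous_on_subset[OF assms(1) sub2[OF st(2,1)]] .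
    obtain x where x: "t \<le> x" "x \<le> s" "f x = 0"
      using IVT2'[of f s 0 t, OF fs ft le c] by blast
    have "x \<in> I" using sub[OF st(2,1) x(1,2)] .
    then show False using assms(3) x(3) by blast
  qed
qed

lemma strict_inc:
  fixes f :: "real \<Rightarrow> real"
  assumes "is_interval I" "\<And>t. t \<in> I \<Longrightarrow> \<exists>y. DERIV f t :> y \<and> y > 0"
    and "x \<in> I" "y \<in> I" "x < y"
  shows "f x < f y"
proof (rule DERIV_pos_imp_increasing[OF assms(5)])
  fix z assume "x \<le> z" "z \<le> y"
  then show "\<exists>d. DERIV f z :> d \<and> d > 0" using assms(2) mem_is_interval_1_I[OF assms(1,3,4)] by blast
qed

lemma null_nz3:
  assumes "lor p p = 0" "p \<noteq> 0" shows "snd (snd p) \<noteq> 0"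
proof
  assume h: "snd (snd p) = 0"
  obtain x y z where p: "p = (x,y,z)" by (cases p) auto
  have "x^2 + y^2 = 0" using assms(1) h by (simp add: p lor_def power2_eq_square)
  then have "x = 0" "y = 0" by (simp_all add: sum_power2_eq_zero_iff)
  then show False using assms(2) h by (simp add: p zero_prod_def)
qed

lemma null_same_sign:
  assumes "lor p p = 0" "lor q q = 0" "lor p q < 0"
  shows "snd (snd p) * snd (snd q) > 0"
proof -
  obtain x y z where p: "p = (x,y,z)" by (cases p) auto
  obtain x' y' z' where q: "q = (x',y',z')" by (cases q) auto
  have h1: "x*x + y*y = z*z" and h2: "x'*x' + y'*y' = z'*z'" and h3: "x*x' + y*y' < z*z'"
    using assms by (simp_all add: p q lor_def)
  have cs: "(x*x' + y*y')^2 \<le> (x*x+y*y)*(x'*x'+y'*y')"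
  proof -
    have "(x*x+y*y)*(x'*x'+y'*y') - (x*x' + y*y')^2 = (x*y' - y*x')^2"
      by (simp add: power2_eq_square algebra_simps)
    moreover have "0 \<le> (x*y' - y*x')^2" by simp
    ultimately show ?thesis by linarith
  qed
  show ?thesis
  proof (rule ccontr)
    assume "\<not> ?thesis"
    then have "z*z' \<le> 0" by (simp add: p q)
    then have "(-(z*z'))^2 < (-(x*x' + y*y'))^2" using h3
      by (intro power_strict_mono) auto
    then have "(z*z')^2 < (x*x' + y*y')^2" by (simp only: power2_minus)
    also have "\<dots> \<le> (z*z)*(z'*z')" using cs h1 h2 by simp
    finally show False by (simp add: power2_eq_square algebra_simps)
  qed
qed

definition pk :: "nat \<Rightarrow> R3 \<Rightarrow> real \<times> real" where
  "pk k q = (if k = 1 then (fst (snd q), snd (snd q)) else (fst q, snd (snd q)))"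

definition dot2 :: "real \<times> real \<Rightarrow> real \<times> real \<Rightarrow> real" where
  "dot2 m x = fst m * fst x + snd m * snd x"

definition det2 :: "real \<times> real \<Rightarrow> real \<times> real \<Rightarrow> real" where
  "det2 p r = fst p * snd r - snd p * fst r"

lemma pk_add: "pk k (p + q) = pk k p + pk k q" by (simp add: pk_def prod_eq_iff)
lemma pk_scale: "pk k (s *\<^sub>R p) = s *\<^sub>R pk k p" by (simp add: pk_def prod_eq_iff)
lemma bounded_linear_pk: "bounded_linear (pk k)"
proof -
  have "pk k = (if k = 1 then (\<lambda>q. (fst (snd q), snd (snd q))) else (\<lambda>q. (fst q, snd (snd q))))"
    by (auto simp: pk_def)
  moreover have "bounded_linear (\<lambda>q::R3. (fst (snd q), snd (snd q)))" by (rule bounded_linear_Pair[OF bl_fs bl_ss])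
  moreover have "bounded_linear (\<lambda>q::R3. (fst q, snd (snd q)))" by (rule bounded_linear_Pair[OF bl_f bl_ss])
  ultimately show ?thesis by simp
qed
lemma snd_pk: "snd (pk k q) = snd (snd q)" by (simp add: pk_def)

lemma bl_dot2: "bounded_linear (\<lambda>x. dot2 m x)"
proof -
  have "bounded_linear (\<lambda>x::real\<times>real. fst m * fst x)"
    by (rule bounded_linear_compose[OF bounded_linear_mult_right bounded_linear_fst])
  moreover have "bounded_linear (\<lambda>x::real\<times>real. snd m * snd x)"
    by (rule bounded_linear_compose[OF bounded_linear_mult_right bounded_linear_snd])
  ultimately show ?thesis unfolding dot2_def by (rule bounded_linear_add)
qed

lemma bl_L: "bounded_linear (\<lambda>q. dot2 m (pk k q))"
  by (rule bounded_linear_compose[OF bl_dot2 bounded_linear_pk])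

lemma cont_L: "continuous_on I f \<Longrightarrow> continuous_on I (\<lambda>s. dot2 m (pk k (f s)))"
  using continuous_on_compose[of I f "\<lambda>q. dot2 m (pk k q)", OF _ linear_continuous_on[OF bl_L]]
  by (simp add: o_def)

locale surf =
  fixes I :: "real set" and al be a b a' b' :: "real \<Rightarrow> R3"
  assumes I: "open I" "is_interval I"
    and dal: "\<And>t. t \<in> I \<Longrightarrow> (al has_vector_derivative a t) (at t)"
    and dbe: "\<And>t. t \<in> I \<Longrightarrow> (be has_vector_derivative b t) (at t)"
    and da: "\<And>t. t \<in> I \<Longrightarrow> (a has_vector_derivative a' t) (at t)"
    and db: "\<And>t. t \<in> I \<Longrightarrow> (b has_vector_derivative b' t) (at t)"
    and ca': "continuous_on I a'" and cb': "continuous_on I b'"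
    and aa: "\<And>t. t \<in> I \<Longrightarrow> lor (a t) (a t) = 0"
    and bb: "\<And>t. t \<in> I \<Longrightarrow> lor (b t) (b t) = 0"
    and ab: "\<And>t. t \<in> I \<Longrightarrow> lor (a t) (b t) < 0"
begin

lemma ca: "continuous_on I a"
  by (rule hvd_cont_on[OF da])
lemma cb: "continuous_on I b"
  by (rule hvd_cont_on[OF db])
lemma cal: "continuous_on I al"
  by (rule hvd_cont_on[OF dal])
lemma cbe: "continuous_on I be"
  by (rule hvd_cont_on[OF dbe])

lemma a_nz: "t \<in> I \<Longrightarrow> a t \<noteq> 0"
  using ab[of t] by (auto simp: lor_def zero_prod_def)
lemma b_nz: "t \<in> I \<Longrightarrow> b t \<noteq> 0"
  using ab[of t] by (auto simp: lor_def zero_prod_def)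

lemma sigma_ex: "\<exists>\<sigma>::real. (\<sigma> = 1 \<or> \<sigma> = -1) \<and> (\<forall>t\<in>I. \<sigma> * snd (snd (a t)) > 0 \<and> \<sigma> * snd (snd (b t)) > 0)"
proof -
  have c3: "continuous_on I (\<lambda>t. snd (snd (a t)))"
    using ca by (intro continuous_intros)
  have disj: "(\<forall>t\<in>I. snd (snd (a t)) > 0) \<or> (\<forall>t\<in>I. snd (snd (a t)) < 0)"
  proof (rule sign_const[OF c3 I(2)])
    fix t assume "t \<in> I"
    then show "snd (snd (a t)) \<noteq> 0" using null_nz3[OF aa a_nz] by simp
  qed
  have pr: "\<And>t. t \<in> I \<Longrightarrow> snd (snd (a t)) * snd (snd (b t)) > 0"
    using null_same_sign[OF aa bb ab] by simp
  from disj show ?thesis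
  proof
    assume h: "\<forall>t\<in>I. snd (snd (a t)) > 0"
    have "\<forall>t\<in>I. 1 * snd (snd (a t)) > 0 \<and> 1 * snd (snd (b t)) > 0"
      using h pr zero_less_mult_pos by fastforce
    then show ?thesis by (intro exI[of _ 1]) simp
  next
    assume h: "\<forall>t\<in>I. snd (snd (a t)) < 0"
    have "\<forall>t\<in>I. -1 * snd (snd (a t)) > 0 \<and> -1 * snd (snd (b t)) > 0"
    proof
      fix t assume t: "t \<in> I"
      then have h1: "snd (snd (a t)) < 0" "0 < snd (snd (a t)) * snd (snd (b t))" using h pr by auto
      then have "snd (snd (b t)) < 0" by (simp add: zero_less_mult_iff)
      then show "-1 * snd (snd (a t)) > 0 \<and> -1 * snd (snd (b t)) > 0" using h1 by simp
    qed
    then show ?thesis by (intro exI[of _ "-1"]) simp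
  qed
qed

definition sg :: real where "sg = (SOME \<sigma>. (\<sigma> = 1 \<or> \<sigma> = -1) \<and> (\<forall>t\<in>I. \<sigma> * snd (snd (a t)) > 0 \<and> \<sigma> * snd (snd (b t)) > 0))"

lemma sg: "sg = 1 \<or> sg = -1" "\<And>t. t \<in> I \<Longrightarrow> sg * snd (snd (a t)) > 0" "\<And>t. t \<in> I \<Longrightarrow> sg * snd (snd (b t)) > 0"
  using someI_ex[OF sigma_ex] unfolding sg_def[symmetric] by auto

definition AA :: "real \<Rightarrow> real" where "AA u = sg * snd (snd (al u))"
definition BB :: "real \<Rightarrow> real" where "BB v = sg * snd (snd (be v))"
definition ZZ :: "real \<Rightarrow> real" where "ZZ t = AA t + BB t"

lemma AA_deriv: "t \<in> I \<Longrightarrow> DERIV AA t :> sg * snd (snd (a t))"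
  unfolding AA_def using comp3_hvd[OF dal, of t 3]
  by (auto intro!: derivative_eq_intros simp: comp3_def)
lemma BB_deriv: "t \<in> I \<Longrightarrow> DERIV BB t :> sg * snd (snd (b t))"
  unfolding BB_def using comp3_hvd[OF dbe, of t 3]
  by (auto intro!: derivative_eq_intros simp: comp3_def)

lemma AA_mono: assumes "x \<in> I" "y \<in> I" "x < y" shows "AA x < AA y"
  apply (rule strict_inc[OF I(2) _ assms])
  using AA_deriv sg(2) by blast
lemma BB_mono: assumes "x \<in> I" "y \<in> I" "x < y" shows "BB x < BB y"
  apply (rule strict_inc[OF I(2) _ assms])
  using BB_deriv sg(3) by blast
lemma AA_le: "x \<in> I \<Longrightarrow> y \<in> I \<Longrightarrow> x \<le> y \<Longrightarrow> AA x \<le> AA y"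
  using AA_mono[of x y] by (cases "x = y") auto
lemma BB_le: "x \<in> I \<Longrightarrow> y \<in> I \<Longrightarrow> x \<le> y \<Longrightarrow> BB x \<le> BB y"
  using BB_mono[of x y] by (cases "x = y") auto
lemma ZZ_mono: "x \<in> I \<Longrightarrow> y \<in> I \<Longrightarrow> x < y \<Longrightarrow> ZZ x < ZZ y"
  unfolding ZZ_def using AA_mono BB_mono by (simp add: add_strict_mono)
lemma ZZ_le: "x \<in> I \<Longrightarrow> y \<in> I \<Longrightarrow> x \<le> y \<Longrightarrow> ZZ x \<le> ZZ y"
  unfolding ZZ_def using AA_le BB_le by (simp add: add_mono)

definition good :: "real set \<Rightarrow> bool" where
  "good J \<longleftrightarrow> J \<subseteq> I \<and> (\<exists>k\<in>{1,2}. \<exists>m. \<forall>s\<in>J. dot2 m (pk k (a s)) > 0 \<and> dot2 m (pk k (b s)) < 0)"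

lemma good_subset: "good J \<Longrightarrow> J' \<subseteq> J \<Longrightarrow> good J'"
  unfolding good_def by blast

lemma det_ex: "t \<in> I \<Longrightarrow> \<exists>k\<in>{1::nat,2}. det2 (pk k (a t)) (pk k (b t)) \<noteq> 0"
proof (rule ccontr)
  assume t: "t \<in> I" and "\<not> (\<exists>k\<in>{1::nat,2}. det2 (pk k (a t)) (pk k (b t)) \<noteq> 0)"
  then have d1: "det2 (pk 1 (a t)) (pk 1 (b t)) = 0" and d2: "det2 (pk 2 (a t)) (pk 2 (b t)) = 0" by auto
  obtain x y z where av: "a t = (x,y,z)" by (cases "a t") auto
  obtain x' y' z' where bv: "b t = (x',y',z')" by (cases "b t") auto
  have z': "z' \<noteq> 0" using null_nz3[OF bb[OF t] b_nz[OF t]] bv by simp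
  have e1: "y*z' = z*y'" and e2: "x*z' = z*x'" using d1 d2 by (simp_all add: det2_def pk_def av bv)
  have "a t = (z/z') *\<^sub>R b t"
    using e1 e2 z' by (simp add: av bv field_simps)
  then have "lor (a t) (b t) = (z/z') * lor (b t) (b t)" by (simp add: lor_scale1)
  then show False using bb[OF t] ab[OF t] by simp
qed

lemma good_exists: "t0 \<in> I \<Longrightarrow> \<exists>r>0. good (ball t0 r)"
proof -
  assume t0: "t0 \<in> I"
  obtain k where k: "k \<in> {1::nat,2}" and d: "det2 (pk k (a t0)) (pk k (b t0)) \<noteq> 0"
    using det_ex[OF t0] by blast
  define p where "p = pk k (a t0)"
  define r where "r = pk k (b t0)"
  define D where "D = det2 p r"
  define m where "m = (D * (snd p + snd r), - D * (fst p + fst r))"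
  have mp: "dot2 m p = D*D" and mr: "dot2 m r = - (D*D)"
    by (simp_all add: m_def D_def dot2_def det2_def power2_eq_square algebra_simps)
  have D0: "D \<noteq> 0" using d by (simp add: D_def p_def r_def)
  have DD: "0 < D*D" using D0 by (cases "D > 0") (auto simp: mult_neg_neg)
  have c1: "continuous_on I (\<lambda>s. dot2 m (pk k (a s)))"
    by (rule cont_L[OF ca])
  have c2: "continuous_on I (\<lambda>s. - dot2 m (pk k (b s)))"
    using cont_L[OF cb] by (rule continuous_on_minus)
  obtain r1 where r1: "r1 > 0" "\<forall>s\<in>ball t0 r1. dot2 m (pk k (a s)) > 0"
    using pos_nbhd[OF c1 I(1) t0] mp DD by (auto simp: p_def)
  obtain r2 where r2: "r2 > 0" "\<forall>s\<in>ball t0 r2. - dot2 m (pk k (b s)) > 0"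
    using pos_nbhd[OF c2 I(1) t0] mr DD by (auto simp: r_def)
  obtain r3 where r3: "r3 > 0" "ball t0 r3 \<subseteq> I" using I(1) t0 open_contains_ball by blast
  define rr where "rr = min r1 (min r2 r3)"
  have h1: "\<forall>s\<in>ball t0 rr. dot2 m (pk k (a s)) > 0 \<and> dot2 m (pk k (b s)) < 0"
    using r1(2) r2(2) by (auto simp: rr_def)
  have h2: "ball t0 rr \<subseteq> I" using r3(2) by (auto simp: rr_def)
  have "good (ball t0 rr)"
    unfolding good_def using h1 h2 k by blast
  moreover have "rr > 0" using r1 r2 r3 by (simp add: rr_def)
  ultimately show ?thesis by blast
qed

definition RR :: "real \<Rightarrow> real set" where "RR t = {r. 0 < r \<and> r \<le> 1 \<and> good (ball t r)}"
definition rho :: "real \<Rightarrow> real" where "rho t = Sup (RR t)"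

lemma RR_ne: "t \<in> I \<Longrightarrow> RR t \<noteq> {}"
proof -
  assume "t \<in> I"
  then obtain r where "r > 0" "good (ball t r)" using good_exists by blast
  moreover have "ball t (min r 1) \<subseteq> ball t r" by (rule subset_ball) simp
  ultimately have "min r 1 \<in> RR t" unfolding RR_def using good_subset[of "ball t r" "ball t (min r 1)"] by auto
  then show ?thesis by blast
qed

lemma RR_bdd: "bdd_above (RR t)" unfolding RR_def bdd_above_def by auto

lemma rho_pos: "t \<in> I \<Longrightarrow> 0 < rho t"
proof -
  assume "t \<in> I"
  then obtain r where "r \<in> RR t" using RR_ne by blast
  then have "r \<le> rho t" unfolding rho_def using RR_bdd by (simp add: cSup_upper)
  then show ?thesis using \<open>r \<in> RR t\<close> by (simp add: RR_def)
qed

lemma rho_good: "t \<in> I \<Longrightarrow> 0 < s \<Longrightarrow> s < rho t \<Longrightarrow> good (ball t s)"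
proof -
  assume "t \<in> I" "0 < s" "s < rho t"
  then obtain r where "r \<in> RR t" "s < r" unfolding rho_def using RR_ne less_cSup_iff[OF RR_ne RR_bdd] by blast
  moreover have "ball t s \<subseteq> ball t r" by (rule subset_ball) (use \<open>s < r\<close> in simp)
  ultimately show ?thesis unfolding RR_def using good_subset[of "ball t r" "ball t s"] by auto
qed

lemma rho_ball_I: "t \<in> I \<Longrightarrow> ball t (rho t / 2) \<subseteq> I"
  using rho_good[of t "rho t / 2"] rho_pos[of t] unfolding good_def by auto

lemma rho_lip:
  assumes t: "t \<in> I" and t0: "t0 \<in> I" and d: "\<bar>t - t0\<bar> < rho t"
  shows "rho t - \<bar>t - t0\<bar> \<le> rho t0"
proof (rule ccontr)
  assume "\<not> ?thesis"
  then have lt: "rho t0 < rho t - \<bar>t - t0\<bar>" by simp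
  define s where "s = (rho t0 + \<bar>t - t0\<bar> + rho t) / 2"
  have s1: "s < rho t" "rho t0 + \<bar>t - t0\<bar> < s" using lt by (simp_all add: s_def)
  have rp: "0 < rho t0" using rho_pos[OF t0] .
  have s0: "0 < s" using s1(2) rp abs_ge_zero[of "t - t0"] by linarith
  have "good (ball t s)" using rho_good[OF t s0 s1(1)] .
  moreover have "ball t0 (s - \<bar>t - t0\<bar>) \<subseteq> ball t s"
    by (auto simp: dist_real_def)
  ultimately have g: "good (ball t0 (s - \<bar>t - t0\<bar>))" using good_subset by blast
  have "rho t \<le> 1" unfolding rho_def using RR_ne[OF t] by (rule cSup_least) (simp add: RR_def)
  then have "s - \<bar>t - t0\<bar> \<in> RR t0" using g s1 rp by (simp add: RR_def)
  then have "s - \<bar>t - t0\<bar> \<le> rho t0" unfolding rho_def using RR_bdd by (simp add: cSup_upper)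
  then show False using s1 by simp
qed

end

definition C1on :: "(real \<times> real) set \<Rightarrow> (real \<times> real \<Rightarrow> real) \<Rightarrow> bool" where
  "C1on W f \<longleftrightarrow> (\<exists>fu fv. continuous_on W fu \<and> continuous_on W fv \<and>
     (\<forall>w\<in>W. (f has_derivative (\<lambda>h. fst h * fu w + snd h * fv w)) (at w)))"

lemma C1onI:
  assumes "continuous_on W fu" "continuous_on W fv"
    "\<And>w. w \<in> W \<Longrightarrow> (f has_derivative (\<lambda>h. fst h * fu w + snd h * fv w)) (at w)"
  shows "C1on W f"
  unfolding C1on_def using assms by blast

lemma C1on_cont: "C1on W f \<Longrightarrow> continuous_on W f"
  unfolding C1on_def
  by (metis continuous_at_imp_continuous_on has_derivative_continuous)

lemma C1_const: "C1on W (\<lambda>w. c)"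
  by (rule C1onI[of W "\<lambda>w. 0" "\<lambda>w. 0"]) (auto intro!: derivative_eq_intros)

lemma C1_fst:
  assumes "\<And>u. u \<in> J \<Longrightarrow> (\<phi> has_real_derivative \<phi>' u) (at u)" "continuous_on J \<phi>'" "W \<subseteq> J \<times> J"
  shows "C1on W (\<lambda>w. \<phi> (fst w))"
proof (rule C1onI[of W "\<lambda>w. \<phi>' (fst w)" "\<lambda>w. 0"])
  show "continuous_on W (\<lambda>w. \<phi>' (fst w))"
    by (rule continuous_on_compose2[OF assms(2) continuous_on_fst[OF continuous_on_id]]) (use assms(3) in auto)
  show "continuous_on W (\<lambda>w. 0)" by simp
  fix w assume w: "w \<in> W"
  then have "fst w \<in> J" using assms(3) by auto
  then have d: "(\<phi> has_derivative (\<lambda>h. \<phi>' (fst w) * h)) (at (fst w))"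
    using assms(1) by (simp add: has_field_derivative_def)
  have "((\<lambda>w. \<phi> (fst w)) has_derivative (\<lambda>h. fst h * \<phi>' (fst w))) (at w)"
    using has_derivative_compose[OF has_derivative_fst[OF has_derivative_ident] d]
    by (rule has_derivative_eq_rhs) (simp add: fun_eq_iff mult.commute)
  then show "((\<lambda>w. \<phi> (fst w)) has_derivative (\<lambda>h. fst h * \<phi>' (fst w) + snd h * 0)) (at w)" by simp
qed

lemma C1_snd:
  assumes "\<And>u. u \<in> J \<Longrightarrow> (\<phi> has_real_derivative \<phi>' u) (at u)" "continuous_on J \<phi>'" "W \<subseteq> J \<times> J"
  shows "C1on W (\<lambda>w. \<phi> (snd w))"
proof (rule C1onI[of W "\<lambda>w. 0" "\<lambda>w. \<phi>' (snd w)"])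
  show "continuous_on W (\<lambda>w. \<phi>' (snd w))"
    by (rule continuous_on_compose2[OF assms(2) continuous_on_snd[OF continuous_on_id]]) (use assms(3) in auto)
  show "continuous_on W (\<lambda>w. 0)" by simp
  fix w assume w: "w \<in> W"
  then have "snd w \<in> J" using assms(3) by auto
  then have d: "(\<phi> has_derivative (\<lambda>h. \<phi>' (snd w) * h)) (at (snd w))"
    using assms(1) by (simp add: has_field_derivative_def)
  have "((\<lambda>w. \<phi> (snd w)) has_derivative (\<lambda>h. snd h * \<phi>' (snd w))) (at w)"
    using has_derivative_compose[OF has_derivative_snd[OF has_derivative_ident] d]
    by (rule has_derivative_eq_rhs) (simp add: fun_eq_iff mult.commute)
  then show "((\<lambda>w. \<phi> (snd w)) has_derivative (\<lambda>h. fst h * 0 + snd h * \<phi>' (snd w))) (at w)" by simp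
qed

lemma C1_add:
  assumes "C1on W f" "C1on W g" shows "C1on W (\<lambda>w. f w + g w)"
proof -
  obtain fu fv where f: "continuous_on W fu" "continuous_on W fv"
    "\<And>w. w \<in> W \<Longrightarrow> (f has_derivative (\<lambda>h. fst h * fu w + snd h * fv w)) (at w)"
    using assms(1) unfolding C1on_def by blast
  obtain gu gv where g: "continuous_on W gu" "continuous_on W gv"
    "\<And>w. w \<in> W \<Longrightarrow> (g has_derivative (\<lambda>h. fst h * gu w + snd h * gv w)) (at w)"
    using assms(2) unfolding C1on_def by blast
  show ?thesis
  proof (rule C1onI[of W "\<lambda>w. fu w + gu w" "\<lambda>w. fv w + gv w"])
    show "continuous_on W (\<lambda>w. fu w + gu w)" "continuous_on W (\<lambda>w. fv w + gv w)"
      using f g by (auto intro: continuous_on_add)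
    fix w assume "w \<in> W"
    then show "((\<lambda>w. f w + g w) has_derivative (\<lambda>h. fst h * (fu w + gu w) + snd h * (fv w + gv w))) (at w)"
      using has_derivative_add[OF f(3) g(3)] by (simp add: algebra_simps)
  qed
qed

lemma C1_diff:
  assumes "C1on W f" "C1on W g" shows "C1on W (\<lambda>w. f w - g w)"
proof -
  obtain fu fv where f: "continuous_on W fu" "continuous_on W fv"
    "\<And>w. w \<in> W \<Longrightarrow> (f has_derivative (\<lambda>h. fst h * fu w + snd h * fv w)) (at w)"
    using assms(1) unfolding C1on_def by blast
  obtain gu gv where g: "continuous_on W gu" "continuous_on W gv"
    "\<And>w. w \<in> W \<Longrightarrow> (g has_derivative (\<lambda>h. fst h * gu w + snd h * gv w)) (at w)"
    using assms(2) unfolding C1on_def by blast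
  show ?thesis
  proof (rule C1onI[of W "\<lambda>w. fu w - gu w" "\<lambda>w. fv w - gv w"])
    show "continuous_on W (\<lambda>w. fu w - gu w)" "continuous_on W (\<lambda>w. fv w - gv w)"
      using f g by (auto intro: continuous_on_diff)
    fix w assume "w \<in> W"
    then show "((\<lambda>w. f w - g w) has_derivative (\<lambda>h. fst h * (fu w - gu w) + snd h * (fv w - gv w))) (at w)"
      using has_derivative_diff[OF f(3) g(3)] by (simp add: algebra_simps)
  qed
qed

lemma C1_mult:
  assumes "C1on W f" "C1on W g" shows "C1on W (\<lambda>w. f w * g w)"
proof -
  obtain fu fv where f: "continuous_on W fu" "continuous_on W fv"
    "\<And>w. w \<in> W \<Longrightarrow> (f has_derivative (\<lambda>h. fst h * fu w + snd h * fv w)) (at w)"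
    using assms(1) unfolding C1on_def by blast
  obtain gu gv where g: "continuous_on W gu" "continuous_on W gv"
    "\<And>w. w \<in> W \<Longrightarrow> (g has_derivative (\<lambda>h. fst h * gu w + snd h * gv w)) (at w)"
    using assms(2) unfolding C1on_def by blast
  have cf: "continuous_on W f" and cg: "continuous_on W g" using assms C1on_cont by auto
  show ?thesis
  proof (rule C1onI[of W "\<lambda>w. f w * gu w + fu w * g w" "\<lambda>w. f w * gv w + fv w * g w"])
    show "continuous_on W (\<lambda>w. f w * gu w + fu w * g w)" "continuous_on W (\<lambda>w. f w * gv w + fv w * g w)"
      using f g cf cg by (auto intro!: continuous_on_add continuous_on_mult)
    fix w assume "w \<in> W"
    then show "((\<lambda>w. f w * g w) has_derivative (\<lambda>h. fst h * (f w * gu w + fu w * g w) + snd h * (f w * gv w + fv w * g w))) (at w)"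
      using has_derivative_mult[OF f(3) g(3)] by (simp add: algebra_simps)
  qed
qed

lemma C1_divide:
  assumes "C1on W f" "C1on W g" "\<And>w. w \<in> W \<Longrightarrow> g w \<noteq> 0" shows "C1on W (\<lambda>w. f w / g w)"
proof -
  obtain fu fv where f: "continuous_on W fu" "continuous_on W fv"
    "\<And>w. w \<in> W \<Longrightarrow> (f has_derivative (\<lambda>h. fst h * fu w + snd h * fv w)) (at w)"
    using assms(1) unfolding C1on_def by blast
  obtain gu gv where g: "continuous_on W gu" "continuous_on W gv"
    "\<And>w. w \<in> W \<Longrightarrow> (g has_derivative (\<lambda>h. fst h * gu w + snd h * gv w)) (at w)"
    using assms(2) unfolding C1on_def by blast
  have cf: "continuous_on W f" and cg: "continuous_on W g" using assms C1on_cont by auto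
  define Du where "Du w = (fu w * g w - f w * gu w) / (g w * g w)" for w
  define Dv where "Dv w = (fv w * g w - f w * gv w) / (g w * g w)" for w
  show ?thesis
  proof (rule C1onI[of W Du Dv])
    show "continuous_on W Du" "continuous_on W Dv"
      unfolding Du_def Dv_def using f g cf cg assms(3)
      by (auto intro!: continuous_on_divide continuous_on_diff continuous_on_mult)
    fix w assume w: "w \<in> W"
    have "((\<lambda>w. f w / g w) has_derivative
        (\<lambda>h. - f w * (inverse (g w) * (fst h * gu w + snd h * gv w) * inverse (g w)) +
               (fst h * fu w + snd h * fv w) / g w)) (at w)"
      using has_derivative_divide[OF f(3)[OF w] g(3)[OF w] assms(3)[OF w]] .
    moreover have "(\<lambda>h. - f w * (inverse (g w) * (fst h * gu w + snd h * gv w) * inverse (g w)) +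
               (fst h * fu w + snd h * fv w) / g w) = (\<lambda>h. fst h * Du w + snd h * Dv w)"
      using assms(3)[OF w] by (auto simp: Du_def Dv_def field_simps)
    ultimately show "((\<lambda>w. f w / g w) has_derivative (\<lambda>h. fst h * Du w + snd h * Dv w)) (at w)" by simp
  qed
qed

lemma hd_cont: "(\<And>x. x \<in> s \<Longrightarrow> (f has_derivative f' x) (at x)) \<Longrightarrow> continuous_on s f"
  by (rule has_derivative_continuous_on) (rule has_derivative_at_withinI)

definition HD :: "(real \<times> real) set \<Rightarrow> (real \<times> real \<Rightarrow> real) \<Rightarrow> (real \<times> real \<Rightarrow> real) \<Rightarrow> (real \<times> real \<Rightarrow> real) \<Rightarrow> bool" where
  "HD W f fu fv \<longleftrightarrow> continuous_on W fu \<and> continuous_on W fv \<and>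
     (\<forall>w\<in>W. (f has_derivative (\<lambda>h. fst h * fu w + snd h * fv w)) (at w))"

lemma C1on_HD: "C1on W f \<Longrightarrow> \<exists>fu fv. HD W f fu fv"
  unfolding C1on_def HD_def by blast

lemma HD_cont: "HD W f fu fv \<Longrightarrow> continuous_on W f"
  unfolding HD_def by (intro hd_cont) blast

lemma partials_total:
  fixes f :: "real \<times> real \<Rightarrow> real"
  assumes "(f has_derivative f') (at y)"
  shows "((\<lambda>s. f (s, snd y)) has_real_derivative f' (1,0)) (at (fst y))"
    and "((\<lambda>s. f (fst y, s)) has_real_derivative f' (0,1)) (at (snd y))"
proof -
  have bl: "bounded_linear f'" using assms by (rule has_derivative_bounded_linear)
  have y: "(fst y, snd y) = y" by simp
  have p1: "((\<lambda>s. (s, snd y)) has_derivative (\<lambda>h. (h, 0))) (at (fst y))"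
    by (auto intro!: derivative_eq_intros)
  have p2: "((\<lambda>s. (fst y, s)) has_derivative (\<lambda>h. (0, h))) (at (snd y))"
    by (auto intro!: derivative_eq_intros)
  have a1: "(f has_derivative f') (at (fst y, snd y))" using assms by simp
  have c1: "((\<lambda>s. f (s, snd y)) has_derivative (\<lambda>h. f' (h, 0))) (at (fst y))"
    using has_derivative_compose[OF p1 a1] .
  have c2: "((\<lambda>s. f (fst y, s)) has_derivative (\<lambda>h. f' (0, h))) (at (snd y))"
    using has_derivative_compose[OF p2 a1] .
  have e1: "(\<lambda>h. f' (h, 0)) = (\<lambda>h. f' (1,0) * h)"
  proof
    fix h :: real
    have "f' (h, 0) = f' (h *\<^sub>R (1,0))" by simp
    also have "\<dots> = h *\<^sub>R f' (1,0)" by (rule linear.scaleR[OF bounded_linear.linear[OF bl]])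
    finally show "f' (h, 0) = f' (1,0) * h" by simp
  qed
  have e2: "(\<lambda>h. f' (0, h)) = (\<lambda>h. f' (0,1) * h)"
  proof
    fix h :: real
    have "f' (0, h) = f' (h *\<^sub>R (0,1))" by simp
    also have "\<dots> = h *\<^sub>R f' (0,1)" by (rule linear.scaleR[OF bounded_linear.linear[OF bl]])
    finally show "f' (0, h) = f' (0,1) * h" by simp
  qed
  show "((\<lambda>s. f (s, snd y)) has_real_derivative f' (1,0)) (at (fst y))"
    using c1 unfolding e1 has_field_derivative_def .
  show "((\<lambda>s. f (fst y, s)) has_real_derivative f' (0,1)) (at (snd y))"
    using c2 unfolding e2 has_field_derivative_def .
qed

lemma HD_partials:
  assumes "HD W f fu fv" "y \<in> W"
  shows "pu f y = fu y" "pv f y = fv y"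
    "(\<lambda>s. f (s, snd y)) differentiable (at (fst y))" "(\<lambda>s. f (fst y, s)) differentiable (at (snd y))"
proof -
  have d: "(f has_derivative (\<lambda>h. fst h * fu y + snd h * fv y)) (at y)" using assms unfolding HD_def by blast
  note p = partials_total[OF d]
  show "pu f y = fu y" unfolding pu_def using DERIV_imp_deriv[OF p(1)] by simp
  show "pv f y = fv y" unfolding pv_def using DERIV_imp_deriv[OF p(2)] by simp
  show "(\<lambda>s. f (s, snd y)) differentiable (at (fst y))" using p(1) real_differentiable_def by blast
  show "(\<lambda>s. f (fst y, s)) differentiable (at (snd y))" using p(2) real_differentiable_def by blast
qed

lemma HD_has_partials: "HD W f fu fv \<Longrightarrow> has_partials_on W f"
  unfolding has_partials_on_def using HD_partials(3,4) by blast

lemma HD_cong: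
  assumes "open W" "HD W f fu fv" "\<And>y. y \<in> W \<Longrightarrow> g y = f y"
  shows "HD W g fu fv"
  unfolding HD_def
proof (intro conjI ballI)
  show "continuous_on W fu" "continuous_on W fv" using assms(2) unfolding HD_def by auto
  fix w assume w: "w \<in> W"
  have "(f has_derivative (\<lambda>h. fst h * fu w + snd h * fv w)) (at w)" using assms(2) w unfolding HD_def by blast
  then show "(g has_derivative (\<lambda>h. fst h * fu w + snd h * fv w)) (at w)"
    by (rule has_derivative_transform_within_open[OF _ assms(1) w]) (simp add: assms(3))
qed

lemma HD_cong2:
  assumes "HD W f fu fv" "\<And>y. y \<in> W \<Longrightarrow> fu' y = fu y" "\<And>y. y \<in> W \<Longrightarrow> fv' y = fv y"
  shows "HD W f fu' fv'"
  using assms unfolding HD_def by (auto cong: continuous_on_cong)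

lemma C2_from_HD:
  assumes U: "open U" and h0: "HD U \<psi> f1 f2" and h1: "HD U f1 h11 h12" and h2: "HD U f2 h21 h22"
  shows "C2_on U \<psi>"
    "\<And>y. y \<in> U \<Longrightarrow> pu \<psi> y = f1 y \<and> pv \<psi> y = f2 y \<and> pu (pu \<psi>) y = h11 y \<and> pv (pu \<psi>) y = h12 y
       \<and> pu (pv \<psi>) y = h21 y \<and> pv (pv \<psi>) y = h22 y"
proof -
  have e1: "\<And>y. y \<in> U \<Longrightarrow> pu \<psi> y = f1 y" and e2: "\<And>y. y \<in> U \<Longrightarrow> pv \<psi> y = f2 y"
    using HD_partials[OF h0] by auto
  have g1: "HD U (pu \<psi>) h11 h12" by (rule HD_cong[OF U h1]) (simp add: e1)
  have g2: "HD U (pv \<psi>) h21 h22" by (rule HD_cong[OF U h2]) (simp add: e2)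
  show "C2_on U \<psi>"
    unfolding C2_on_def
  proof (intro conjI)
    show "continuous_on U \<psi>" using HD_cont[OF h0] .
    show "has_partials_on U \<psi>" using HD_has_partials[OF h0] .
    show "has_partials_on U (pu \<psi>)" using HD_has_partials[OF g1] .
    show "has_partials_on U (pv \<psi>)" using HD_has_partials[OF g2] .
    show "continuous_on U (pu \<psi>)" using HD_cont[OF g1] .
    show "continuous_on U (pv \<psi>)" using HD_cont[OF g2] .
    show "continuous_on U (pu (pu \<psi>))"
      using g1 HD_partials(1)[OF g1] unfolding HD_def by (auto cong: continuous_on_cong)
    show "continuous_on U (pv (pu \<psi>))"
      using g1 HD_partials(2)[OF g1] unfolding HD_def by (auto cong: continuous_on_cong)
    show "continuous_on U (pu (pv \<psi>))"
      using g2 HD_partials(1)[OF g2] unfolding HD_def by (auto cong: continuous_on_cong)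
    show "continuous_on U (pv (pv \<psi>))"
      using g2 HD_partials(2)[OF g2] unfolding HD_def by (auto cong: continuous_on_cong)
  qed
  fix y assume y: "y \<in> U"
  show "pu \<psi> y = f1 y \<and> pv \<psi> y = f2 y \<and> pu (pu \<psi>) y = h11 y \<and> pv (pu \<psi>) y = h12 y
       \<and> pu (pv \<psi>) y = h21 y \<and> pv (pv \<psi>) y = h22 y"
    using e1 e2 HD_partials(1,2)[OF g1 y] HD_partials(1,2)[OF g2 y] y by simp
qed

lemma HD_comp:
  assumes hd: "HD W \<phi> fu fv" and GU: "\<And>y. y \<in> U \<Longrightarrow> G y \<in> W"
    and dG: "\<And>y. y \<in> U \<Longrightarrow> (G has_derivative (\<lambda>h. (fst h * g11 y + snd h * g12 y, fst h * g21 y + snd h * g22 y))) (at y)"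
    and c: "continuous_on U g11" "continuous_on U g12" "continuous_on U g21" "continuous_on U g22"
  shows "HD U (\<lambda>y. \<phi> (G y)) (\<lambda>y. g11 y * fu (G y) + g21 y * fv (G y)) (\<lambda>y. g12 y * fu (G y) + g22 y * fv (G y))"
  unfolding HD_def
proof (intro conjI ballI)
  have cG: "continuous_on U G" using dG by (rule hd_cont)
  have cfu: "continuous_on U (\<lambda>y. fu (G y))"
    using continuous_on_compose2[of W fu U G] hd cG GU unfolding HD_def by blast
  have cfv: "continuous_on U (\<lambda>y. fv (G y))"
    using continuous_on_compose2[of W fv U G] hd cG GU unfolding HD_def by blast
  show "continuous_on U (\<lambda>y. g11 y * fu (G y) + g21 y * fv (G y))"
    using c cfu cfv by (intro continuous_on_add continuous_on_mult)
  show "continuous_on U (\<lambda>y. g12 y * fu (G y) + g22 y * fv (G y))"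
    using c cfu cfv by (intro continuous_on_add continuous_on_mult)
  fix y assume y: "y \<in> U"
  have d\<phi>: "(\<phi> has_derivative (\<lambda>h. fst h * fu (G y) + snd h * fv (G y))) (at (G y))"
    using hd GU[OF y] unfolding HD_def by blast
  have "((\<lambda>y. \<phi> (G y)) has_derivative
      (\<lambda>h. fst (fst h * g11 y + snd h * g12 y, fst h * g21 y + snd h * g22 y) * fu (G y)
         + snd (fst h * g11 y + snd h * g12 y, fst h * g21 y + snd h * g22 y) * fv (G y))) (at y)"
    using has_derivative_compose[OF dG[OF y] d\<phi>] .
  then show "((\<lambda>y. \<phi> (G y)) has_derivative
      (\<lambda>h. fst h * (g11 y * fu (G y) + g21 y * fv (G y)) + snd h * (g12 y * fu (G y) + g22 y * fv (G y)))) (at y)"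
    by (rule has_derivative_eq_rhs) (simp add: fun_eq_iff algebra_simps)
qed

lemma deriv_zero_on_open:
  assumes "open W" "w \<in> W" "\<And>x. x \<in> W \<Longrightarrow> E x = 0" "(E has_derivative E') (at w)"
  shows "E' h = 0"
proof -
  have "((\<lambda>x. 0) has_derivative (\<lambda>h. 0)) (at w)" by simp
  then have "(E has_derivative (\<lambda>h. 0)) (at w)"
    by (rule has_derivative_transform_within_open[OF _ assms(1,2)]) (simp add: assms(3))
  then have "E' = (\<lambda>h. 0)" using has_derivative_unique[OF assms(4)] by blast
  then show ?thesis by simp
qed

lemma fst_lift_deriv:
  assumes "(\<phi> has_real_derivative d) (at (fst w))"
  shows "((\<lambda>x. \<phi> (fst x)) has_derivative (\<lambda>h. fst h * d)) (at w)"
proof -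
  have dd: "(\<phi> has_derivative (\<lambda>h. d * h)) (at (fst w))" using assms by (simp add: has_field_derivative_def)
  show ?thesis
    using has_derivative_compose[OF has_derivative_fst[OF has_derivative_ident] dd]
    by (rule has_derivative_eq_rhs) (simp add: fun_eq_iff mult.commute)
qed

lemma snd_lift_deriv:
  assumes "(\<phi> has_real_derivative d) (at (snd w))"
  shows "((\<lambda>x. \<phi> (snd x)) has_derivative (\<lambda>h. snd h * d)) (at w)"
proof -
  have dd: "(\<phi> has_derivative (\<lambda>h. d * h)) (at (snd w))" using assms by (simp add: has_field_derivative_def)
  show ?thesis
    using has_derivative_compose[OF has_derivative_snd[OF has_derivative_ident] dd]
    by (rule has_derivative_eq_rhs) (simp add: fun_eq_iff mult.commute)
qed

lemma has_derivative_X_gen: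
  assumes "(f has_vector_derivative f') (at u)" "(g has_vector_derivative g') (at v)"
  shows "((\<lambda>w. f (fst w) + g (snd w)) has_derivative (\<lambda>h. fst h *\<^sub>R f' + snd h *\<^sub>R g')) (at (u,v))"
proof -
  have f: "(f has_derivative (\<lambda>h. h *\<^sub>R f')) (at (fst (u,v)))" using assms(1) by (simp add: has_vector_derivative_def)
  have g: "(g has_derivative (\<lambda>h. h *\<^sub>R g')) (at (snd (u,v)))" using assms(2) by (simp add: has_vector_derivative_def)
  have "((\<lambda>w. f (fst w)) has_derivative (\<lambda>h. fst h *\<^sub>R f')) (at (u,v))"
    using has_derivative_compose[OF has_derivative_fst[OF has_derivative_ident] f] by simp
  moreover have "((\<lambda>w. g (snd w)) has_derivative (\<lambda>h. snd h *\<^sub>R g')) (at (u,v))"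
    using has_derivative_compose[OF has_derivative_snd[OF has_derivative_ident] g] by simp
  ultimately show ?thesis by (rule has_derivative_add)
qed

lemma L_deriv:
  "(f has_vector_derivative f') F \<Longrightarrow> ((\<lambda>t. dot2 m (pk k (f t))) has_real_derivative dot2 m (pk k f')) F"
  using bounded_linear.has_vector_derivative[OF bl_L, of f f' F m k]
  by (simp add: has_real_derivative_iff_has_vector_derivative)

lemma pk_comp: "fst (pk k q) = comp3 (if k = 1 then 2 else 1) q" "snd (pk k q) = comp3 3 q"
  by (simp_all add: pk_def comp3_def)

lemma null_k: "k \<in> {1,2} \<Longrightarrow> (comp3 k q)^2 + (fst (pk k q))^2 - (snd (pk k q))^2 = lor q q"
  by (auto simp: pk_def comp3_def lor_def power2_eq_square)

lemma graph_pt_pk: "k \<in> {1,2} \<Longrightarrow> graph_pt k \<psi> (pk k q) = q \<longleftrightarrow> \<psi> (pk k q) = comp3 k q"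
  by (cases q) (auto simp: graph_pt_def pk_def comp3_def)

context surf
begin

definition dl :: "real \<Rightarrow> real" where "dl t = rho t / 8"
definition Om :: "(real \<times> real) set" where "Om = {w. \<exists>t\<in>I. fst w \<in> ball t (dl t) \<and> snd w \<in> ball t (dl t)}"
definition X :: "real \<times> real \<Rightarrow> R3" where "X w = al (fst w) + be (snd w)"
definition SS :: "R3 set" where "SS = X ` Om"
definition slab :: "real \<Rightarrow> R3 set" where
  "slab t0 = {q. ZZ (t0 - dl t0) < sg * snd (snd q) \<and> sg * snd (snd q) < ZZ (t0 + dl t0)}"

lemma dl_pos: "t \<in> I \<Longrightarrow> 0 < dl t" using rho_pos by (simp add: dl_def)

lemma ball4_I: "t \<in> I \<Longrightarrow> ball t (4 * dl t) \<subseteq> I"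
  using rho_ball_I by (simp add: dl_def)

lemma ball4_good: "t \<in> I \<Longrightarrow> good (ball t (4 * dl t))"
  using rho_good[of t "4 * dl t"] rho_pos[of t] by (simp add: dl_def)

lemma in_ball4: "t \<in> I \<Longrightarrow> \<bar>x - t\<bar> < 4 * dl t \<Longrightarrow> x \<in> I"
  using ball4_I[of t] by (auto simp: dist_real_def abs_minus_commute)

lemma X3: "sg * snd (snd (X w)) = AA (fst w) + BB (snd w)"
  by (simp add: X_def AA_def BB_def algebra_simps)

lemma Om_eq: "Om = (\<Union>t\<in>I. ball t (dl t) \<times> ball t (dl t))"
  unfolding Om_def by (auto simp: mem_Times_iff)

lemma Om_open: "open Om"
  unfolding Om_eq by (intro open_UN ballI open_Times open_ball)

lemma Om_sub: "Om \<subseteq> I \<times> I"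
proof
  fix w assume "w \<in> Om"
  then obtain t where t: "t \<in> I" "fst w \<in> ball t (dl t)" "snd w \<in> ball t (dl t)" unfolding Om_def by blast
  have "dl t \<le> 4 * dl t" using dl_pos[OF t(1)] by simp
  then have "fst w \<in> I" "snd w \<in> I" using t in_ball4[OF t(1)] by (auto simp: dist_real_def abs_minus_commute)
  then show "w \<in> I \<times> I" by (simp add: mem_Times_iff)
qed

lemma diag_Om: "t \<in> I \<Longrightarrow> (t, t) \<in> Om"
  unfolding Om_def using dl_pos by force

lemma slab_open: "open (slab t0)"
proof -
  have "slab t0 = {q. ZZ (t0 - dl t0) < sg * snd (snd q)} \<inter> {q. sg * snd (snd q) < ZZ (t0 + dl t0)}"
    by (auto simp: slab_def)
  moreover have "open {q::R3. ZZ (t0 - dl t0) < sg * snd (snd q)}"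
    by (rule open_Collect_less) (intro continuous_intros)+
  moreover have "open {q::R3. sg * snd (snd q) < ZZ (t0 + dl t0)}"
    by (rule open_Collect_less) (intro continuous_intros)+
  ultimately show ?thesis by auto
qed

lemma slab_bounds:
  assumes t: "t \<in> I" and u: "\<bar>u - t\<bar> < dl t" and v: "\<bar>v - t\<bar> < dl t"
  shows "ZZ (t - dl t) < AA u + BB v" "AA u + BB v < ZZ (t + dl t)"
proof -
  have dp: "0 < dl t" using dl_pos[OF t] .
  have I1: "t - dl t \<in> I" "t + dl t \<in> I" "u \<in> I" "v \<in> I"
    using in_ball4[OF t] dp u v by auto
  have "AA (t - dl t) < AA u" using AA_mono[OF I1(1) I1(3)] u by (simp add: abs_less_iff)
  moreover have "BB (t - dl t) < BB v" using BB_mono[OF I1(1) I1(4)] v by (simp add: abs_less_iff)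
  ultimately show "ZZ (t - dl t) < AA u + BB v" by (simp add: ZZ_def)
  have "AA u < AA (t + dl t)" using AA_mono[OF I1(3) I1(2)] u by (simp add: abs_less_iff)
  moreover have "BB v < BB (t + dl t)" using BB_mono[OF I1(4) I1(2)] v by (simp add: abs_less_iff)
  ultimately show "AA u + BB v < ZZ (t + dl t)" by (simp add: ZZ_def)
qed

lemma in_slab: "t0 \<in> I \<Longrightarrow> w \<in> ball t0 (dl t0) \<times> ball t0 (dl t0) \<Longrightarrow> X w \<in> slab t0"
  using slab_bounds[of t0 "fst w" "snd w"] X3[of w]
  by (auto simp: slab_def mem_Times_iff dist_real_def abs_minus_commute)

lemma confine:
  assumes t0: "t0 \<in> I" and w: "w \<in> Om" and s: "X w \<in> slab t0"
  shows "\<bar>fst w - t0\<bar> < 4 * dl t0" "\<bar>snd w - t0\<bar> < 4 * dl t0"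
proof -
  obtain t where t: "t \<in> I" "fst w \<in> ball t (dl t)" "snd w \<in> ball t (dl t)" using w unfolding Om_def by blast
  define u where "u = fst w"
  define v where "v = snd w"
  have u: "\<bar>u - t\<bar> < dl t" and v: "\<bar>v - t\<bar> < dl t"
    using t(2,3) by (auto simp: u_def v_def dist_real_def abs_minus_commute)
  have val: "sg * snd (snd (X w)) = AA u + BB v" by (simp add: X3 u_def v_def)
  note b = slab_bounds[OF t(1) u v]
  have s1: "ZZ (t0 - dl t0) < AA u + BB v" "AA u + BB v < ZZ (t0 + dl t0)"
    using s val by (auto simp: slab_def)
  have dp: "0 < dl t" "0 < dl t0" using dl_pos t(1) t0 by auto
  have I1: "t - dl t \<in> I" "t + dl t \<in> I" "t0 - dl t0 \<in> I" "t0 + dl t0 \<in> I"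
    using in_ball4[OF t(1)] in_ball4[OF t0] dp by auto
  have c1: "t - dl t < t0 + dl t0"
  proof (rule ccontr)
    assume "\<not> ?thesis"
    then have "ZZ (t0 + dl t0) \<le> ZZ (t - dl t)" using ZZ_le[OF I1(4) I1(1)] by simp
    then show False using b(1) s1(2) by simp
  qed
  have c2: "t0 - dl t0 < t + dl t"
  proof (rule ccontr)
    assume "\<not> ?thesis"
    then have "ZZ (t + dl t) \<le> ZZ (t0 - dl t0)" using ZZ_le[OF I1(2) I1(3)] by simp
    then show False using b(2) s1(1) by simp
  qed
  have d: "\<bar>t - t0\<bar> < dl t + dl t0" using c1 c2 by (simp add: abs_less_iff)
  have main: "dl t + \<bar>t - t0\<bar> < 4 * dl t0"
  proof (cases "dl t \<le> dl t0")
    case True then show ?thesis using d by simp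
  next
    case False
    then have "\<bar>t - t0\<bar> < rho t" using d dp by (simp add: dl_def)
    then have "rho t - \<bar>t - t0\<bar> \<le> rho t0" by (rule rho_lip[OF t(1) t0])
    then show ?thesis using d False by (simp add: dl_def)
  qed
  have "\<bar>u - t0\<bar> \<le> \<bar>u - t\<bar> + \<bar>t - t0\<bar>" by simp
  then show "\<bar>fst w - t0\<bar> < 4 * dl t0" using u main by (simp add: u_def)
  have "\<bar>v - t0\<bar> \<le> \<bar>v - t\<bar> + \<bar>t - t0\<bar>" by simp
  then show "\<bar>snd w - t0\<bar> < 4 * dl t0" using v main by (simp add: v_def)
qed

end

lemma pk_fst_hvd: "(f has_vector_derivative f') F \<Longrightarrow> ((\<lambda>t. fst (pk k (f t))) has_real_derivative fst (pk k f')) F"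
  unfolding pk_comp by (rule comp3_hvd)
lemma pk_snd_hvd: "(f has_vector_derivative f') F \<Longrightarrow> ((\<lambda>t. snd (pk k (f t))) has_real_derivative snd (pk k f')) F"
  unfolding pk_comp by (rule comp3_hvd)

context surf
begin

lemma X_deriv: "w \<in> I \<times> I \<Longrightarrow> (X has_derivative (\<lambda>h. fst h *\<^sub>R a (fst w) + snd h *\<^sub>R b (snd w))) (at w)"
proof -
  assume w: "w \<in> I \<times> I"
  obtain u v where uv: "w = (u, v)" by (cases w)
  have "u \<in> I" "v \<in> I" using w uv by auto
  then show ?thesis using has_derivative_X_gen[OF dal dbe, of u v] uv by (simp add: X_def[abs_def])
qed

lemma cont_lin_a: "continuous_on I (\<lambda>u. \<phi> (a' u))" if "bounded_linear \<phi>"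
  by (rule continuous_on_compose2[OF linear_continuous_on[OF that] ca']) (rule subset_UNIV)
lemma cont_lin_b: "continuous_on I (\<lambda>u. \<phi> (b' u))" if "bounded_linear \<phi>"
  by (rule continuous_on_compose2[OF linear_continuous_on[OF that] cb']) (rule subset_UNIV)
lemma cont_lin_a0: "continuous_on I (\<lambda>u. \<phi> (a u))" if "bounded_linear \<phi>"
  by (rule continuous_on_compose2[OF linear_continuous_on[OF that] ca]) (rule subset_UNIV)
lemma cont_lin_b0: "continuous_on I (\<lambda>u. \<phi> (b u))" if "bounded_linear \<phi>"
  by (rule continuous_on_compose2[OF linear_continuous_on[OF that] cb]) (rule subset_UNIV)

lemma bl_pkf: "bounded_linear (\<lambda>q. fst (pk k q))" by (rule bounded_linear_fst_comp[OF bounded_linear_pk])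
lemma bl_pks: "bounded_linear (\<lambda>q. snd (pk k q))" by (rule bounded_linear_snd_comp[OF bounded_linear_pk])

lemma C1_afst:
  assumes "W \<subseteq> I \<times> I" "bounded_linear \<phi>"
    and hd: "\<And>f f' F. (f has_vector_derivative f') F \<Longrightarrow> ((\<lambda>t. \<phi> (f t)) has_real_derivative \<phi> f') F"
  shows "C1on W (\<lambda>w. \<phi> (a (fst w)))"
proof (rule C1_fst[of I "\<lambda>u. \<phi> (a u)" "\<lambda>u. \<phi> (a' u)"])
  fix u assume "u \<in> I" then show "((\<lambda>u. \<phi> (a u)) has_real_derivative \<phi> (a' u)) (at u)" by (rule hd[OF da])
next
  show "continuous_on I (\<lambda>u. \<phi> (a' u))" by (rule cont_lin_a[OF assms(2)])
  show "W \<subseteq> I \<times> I" by fact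
qed

lemma C1_bsnd:
  assumes "W \<subseteq> I \<times> I" "bounded_linear \<phi>"
    and hd: "\<And>f f' F. (f has_vector_derivative f') F \<Longrightarrow> ((\<lambda>t. \<phi> (f t)) has_real_derivative \<phi> f') F"
  shows "C1on W (\<lambda>w. \<phi> (b (snd w)))"
proof (rule C1_snd[of I "\<lambda>u. \<phi> (b u)" "\<lambda>u. \<phi> (b' u)"])
  fix u assume "u \<in> I" then show "((\<lambda>u. \<phi> (b u)) has_real_derivative \<phi> (b' u)) (at u)" by (rule hd[OF db])
next
  show "continuous_on I (\<lambda>u. \<phi> (b' u))" by (rule cont_lin_b[OF assms(2)])
  show "W \<subseteq> I \<times> I" by fact
qed

definition P1 :: "nat \<Rightarrow> real \<times> real \<Rightarrow> real" where "P1 k w = fst (pk k (a (fst w)))"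
definition P2 :: "nat \<Rightarrow> real \<times> real \<Rightarrow> real" where "P2 k w = snd (pk k (a (fst w)))"
definition R1 :: "nat \<Rightarrow> real \<times> real \<Rightarrow> real" where "R1 k w = fst (pk k (b (snd w)))"
definition R2 :: "nat \<Rightarrow> real \<times> real \<Rightarrow> real" where "R2 k w = snd (pk k (b (snd w)))"
definition Aj :: "nat \<Rightarrow> real \<times> real \<Rightarrow> real" where "Aj k w = comp3 k (a (fst w))"
definition Bj :: "nat \<Rightarrow> real \<times> real \<Rightarrow> real" where "Bj k w = comp3 k (b (snd w))"
definition Dt :: "nat \<Rightarrow> real \<times> real \<Rightarrow> real" where "Dt k w = P1 k w * R2 k w - P2 k w * R1 k w"
definition Phi1 :: "nat \<Rightarrow> real \<times> real \<Rightarrow> real" where "Phi1 k w = (Aj k w * R2 k w - Bj k w * P2 k w) / Dt k w"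
definition Phi2 :: "nat \<Rightarrow> real \<times> real \<Rightarrow> real" where "Phi2 k w = (Bj k w * P1 k w - Aj k w * R1 k w) / Dt k w"

lemma C1_P1: "W \<subseteq> I \<times> I \<Longrightarrow> C1on W (P1 k)"
  unfolding P1_def[abs_def] by (rule C1_afst[OF _ bl_pkf pk_fst_hvd])
lemma C1_P2: "W \<subseteq> I \<times> I \<Longrightarrow> C1on W (P2 k)"
  unfolding P2_def[abs_def] by (rule C1_afst[OF _ bl_pks pk_snd_hvd])
lemma C1_R1: "W \<subseteq> I \<times> I \<Longrightarrow> C1on W (R1 k)"
  unfolding R1_def[abs_def] by (rule C1_bsnd[OF _ bl_pkf pk_fst_hvd])
lemma C1_R2: "W \<subseteq> I \<times> I \<Longrightarrow> C1on W (R2 k)"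
  unfolding R2_def[abs_def] by (rule C1_bsnd[OF _ bl_pks pk_snd_hvd])
lemma C1_Aj: "W \<subseteq> I \<times> I \<Longrightarrow> C1on W (Aj k)"
  unfolding Aj_def[abs_def] by (rule C1_afst[OF _ bounded_linear_comp3 comp3_hvd])
lemma C1_Bj: "W \<subseteq> I \<times> I \<Longrightarrow> C1on W (Bj k)"
  unfolding Bj_def[abs_def] by (rule C1_bsnd[OF _ bounded_linear_comp3 comp3_hvd])
lemma C1_Dt: "W \<subseteq> I \<times> I \<Longrightarrow> C1on W (Dt k)"
  unfolding Dt_def[abs_def] by (intro C1_diff C1_mult C1_P1 C1_P2 C1_R1 C1_R2)
lemma C1_Phi1: "W \<subseteq> I \<times> I \<Longrightarrow> (\<And>w. w \<in> W \<Longrightarrow> Dt k w \<noteq> 0) \<Longrightarrow> C1on W (Phi1 k)"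
  unfolding Phi1_def[abs_def] by (intro C1_divide C1_diff C1_mult C1_P2 C1_R2 C1_Aj C1_Bj C1_Dt) auto
lemma C1_Phi2: "W \<subseteq> I \<times> I \<Longrightarrow> (\<And>w. w \<in> W \<Longrightarrow> Dt k w \<noteq> 0) \<Longrightarrow> C1on W (Phi2 k)"
  unfolding Phi2_def[abs_def] by (intro C1_divide C1_diff C1_mult C1_P1 C1_R1 C1_Aj C1_Bj C1_Dt) auto

lemma P1_deriv: "fst w \<in> I \<Longrightarrow> (P1 k has_derivative (\<lambda>h. fst h * fst (pk k (a' (fst w))))) (at w)"
  unfolding P1_def[abs_def] by (rule fst_lift_deriv[OF pk_fst_hvd[OF da]])
lemma P2_deriv: "fst w \<in> I \<Longrightarrow> (P2 k has_derivative (\<lambda>h. fst h * snd (pk k (a' (fst w))))) (at w)"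
  unfolding P2_def[abs_def] by (rule fst_lift_deriv[OF pk_snd_hvd[OF da]])
lemma Aj_deriv: "fst w \<in> I \<Longrightarrow> (Aj k has_derivative (\<lambda>h. fst h * comp3 k (a' (fst w)))) (at w)"
  unfolding Aj_def[abs_def] by (rule fst_lift_deriv[OF comp3_hvd[OF da]])
lemma R1_deriv: "snd w \<in> I \<Longrightarrow> (R1 k has_derivative (\<lambda>h. snd h * fst (pk k (b' (snd w))))) (at w)"
  unfolding R1_def[abs_def] by (rule snd_lift_deriv[OF pk_fst_hvd[OF db]])
lemma R2_deriv: "snd w \<in> I \<Longrightarrow> (R2 k has_derivative (\<lambda>h. snd h * snd (pk k (b' (snd w))))) (at w)"
  unfolding R2_def[abs_def] by (rule snd_lift_deriv[OF pk_snd_hvd[OF db]])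
lemma Bj_deriv: "snd w \<in> I \<Longrightarrow> (Bj k has_derivative (\<lambda>h. snd h * comp3 k (b' (snd w)))) (at w)"
  unfolding Bj_def[abs_def] by (rule snd_lift_deriv[OF comp3_hvd[OF db]])

end

lemma inv2:
  fixes d p1 p2 r1 r2 y1 y2 :: real
  assumes "d = p1*r2 - p2*r1" "d \<noteq> 0"
  shows "(y1*(r2/d) + y2*(-r1/d)) * p1 + (y1*(-p2/d) + y2*(p1/d)) * r1 = y1"
    "(y1*(r2/d) + y2*(-r1/d)) * p2 + (y1*(-p2/d) + y2*(p1/d)) * r2 = y2"
proof -
  have "(y1*(r2/d) + y2*(-r1/d)) * p1 + (y1*(-p2/d) + y2*(p1/d)) * r1 = (y1*(p1*r2 - p2*r1))/d"
    using assms(2) by (simp add: field_simps)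
  also have "\<dots> = y1" using assms by simp
  finally show "(y1*(r2/d) + y2*(-r1/d)) * p1 + (y1*(-p2/d) + y2*(p1/d)) * r1 = y1" .
  have "(y1*(r2/d) + y2*(-r1/d)) * p2 + (y1*(-p2/d) + y2*(p1/d)) * r2 = (y2*(p1*r2 - p2*r1))/d"
    using assms(2) by (simp add: field_simps)
  also have "\<dots> = y2" using assms by simp
  finally show "(y1*(r2/d) + y2*(-r1/d)) * p2 + (y1*(-p2/d) + y2*(p1/d)) * r2 = y2" .
qed

locale chartctx = surf +
  fixes J :: "real set" and k :: nat and m :: "real \<times> real" and W :: "(real \<times> real) set"
  assumes J: "is_interval J" "J \<subseteq> I" and k: "k \<in> {1,2}"
    and msign: "\<And>s. s \<in> J \<Longrightarrow> dot2 m (pk k (a s)) > 0 \<and> dot2 m (pk k (b s)) < 0"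
    and W: "open W" "W \<subseteq> J \<times> J"
begin

definition F :: "real \<times> real \<Rightarrow> real \<times> real" where "F w = pk k (X w)"
definition G :: "real \<times> real \<Rightarrow> real \<times> real" where "G = inv_into W F"
definition U :: "(real \<times> real) set" where "U = F ` W"
definition psi :: "real \<times> real \<Rightarrow> real" where "psi y = comp3 k (X (G y))"
definition g11 :: "real \<times> real \<Rightarrow> real" where "g11 w = R2 k w / Dt k w"
definition g12 :: "real \<times> real \<Rightarrow> real" where "g12 w = - R1 k w / Dt k w"
definition g21 :: "real \<times> real \<Rightarrow> real" where "g21 w = - P2 k w / Dt k w"
definition g22 :: "real \<times> real \<Rightarrow> real" where "g22 w = P1 k w / Dt k w"
definition Lg :: "real \<times> real \<Rightarrow> real \<times> real \<Rightarrow> real \<times> real" where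
  "Lg w y = (fst y * g11 w + snd y * g12 w, fst y * g21 w + snd y * g22 w)"
definition DF :: "real \<times> real \<Rightarrow> real \<times> real \<Rightarrow> real \<times> real" where
  "DF w h = fst h *\<^sub>R pk k (a (fst w)) + snd h *\<^sub>R pk k (b (snd w))"

lemma JJI: "J \<times> J \<subseteq> I \<times> I" using J(2) by auto
lemma WI: "W \<subseteq> I \<times> I" using W(2) JJI by blast

lemma sgP2: "w \<in> J \<times> J \<Longrightarrow> sg * P2 k w > 0"
  using sg(2)[of "fst w"] J(2) by (auto simp: P2_def snd_pk)
lemma sgR2: "w \<in> J \<times> J \<Longrightarrow> sg * R2 k w > 0"
  using sg(3)[of "snd w"] J(2) by (auto simp: R2_def snd_pk)

lemma Dt_nz: "w \<in> J \<times> J \<Longrightarrow> Dt k w \<noteq> 0"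
proof
  assume w: "w \<in> J \<times> J" and D: "Dt k w = 0"
  have m1: "dot2 m (pk k (a (fst w))) > 0" and m2: "dot2 m (pk k (b (snd w))) < 0"
    using msign w by (auto simp: mem_Times_iff)
  define dA where "dA = dot2 m (pk k (a (fst w)))"
  define dB where "dB = dot2 m (pk k (b (snd w)))"
  have "R2 k w * dA - P2 k w * dB = fst m * Dt k w"
    by (simp add: dA_def dB_def dot2_def Dt_def P1_def P2_def R1_def R2_def algebra_simps)
  then have eq: "R2 k w * dA = P2 k w * dB" using D by simp
  have "sg * R2 k w * dA > 0" using sgR2[OF w] m1 by (simp add: dA_def)
  moreover have "sg * P2 k w * dB < 0" using sgP2[OF w] m2 by (simp add: dB_def mult_pos_neg)
  ultimately show False using eq by (simp add: mult.assoc)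
qed

lemma fm_mono: "u \<in> J \<Longrightarrow> u' \<in> J \<Longrightarrow> u < u' \<Longrightarrow> dot2 m (pk k (al u)) < dot2 m (pk k (al u'))"
proof -
  assume h: "u \<in> J" "u' \<in> J" "u < u'"
  show ?thesis
  proof (rule strict_inc[OF J(1) _ h])
    fix t assume t: "t \<in> J"
    then have "DERIV (\<lambda>u. dot2 m (pk k (al u))) t :> dot2 m (pk k (a t))"
      using L_deriv[OF dal] J(2) by blast
    then show "\<exists>y. DERIV (\<lambda>u. dot2 m (pk k (al u))) t :> y \<and> y > 0" using msign[OF t] by blast
  qed
qed

lemma gm_mono: "v \<in> J \<Longrightarrow> v' \<in> J \<Longrightarrow> v < v' \<Longrightarrow> dot2 m (pk k (be v')) < dot2 m (pk k (be v))"
proof -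
  assume h: "v \<in> J" "v' \<in> J" "v < v'"
  have "- dot2 m (pk k (be v)) < - dot2 m (pk k (be v'))"
  proof (rule strict_inc[OF J(1) _ h, of "\<lambda>v. - dot2 m (pk k (be v))"])
    fix t assume t: "t \<in> J"
    then have "DERIV (\<lambda>v. dot2 m (pk k (be v))) t :> dot2 m (pk k (b t))"
      using L_deriv[OF dbe] J(2) by blast
    then have "DERIV (\<lambda>v. - dot2 m (pk k (be v))) t :> - dot2 m (pk k (b t))"
      by (rule DERIV_minus)
    then show "\<exists>y. DERIV (\<lambda>v. - dot2 m (pk k (be v))) t :> y \<and> y > 0" using msign[OF t] by fastforce
  qed
  then show ?thesis by simp
qed

lemma dotF: "dot2 m (F w) = dot2 m (pk k (al (fst w))) + dot2 m (pk k (be (snd w)))"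
  by (simp add: F_def X_def pk_add dot2_def algebra_simps)

lemma F_inj: "inj_on F (J \<times> J)"
proof (rule inj_onI)
  fix w w' assume w: "w \<in> J \<times> J" and w': "w' \<in> J \<times> J" and e: "F w = F w'"
  obtain u v where uv: "w = (u,v)" by (cases w)
  obtain u' v' where uv': "w' = (u',v')" by (cases w')
  have J4: "u \<in> J" "v \<in> J" "u' \<in> J" "v' \<in> J" using w w' uv uv' by auto
  have I4: "u \<in> I" "v \<in> I" "u' \<in> I" "v' \<in> I" using J4 J(2) by auto
  have z: "AA u + BB v = AA u' + BB v'"
  proof -
    have "snd (F w) = snd (F w')" using e by simp
    then have ee: "snd (snd (X w)) = snd (snd (X w'))" by (simp add: F_def snd_pk)
    have "AA u + BB v = sg * snd (snd (X w))" using X3[of w] uv by simp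
    also have "\<dots> = sg * snd (snd (X w'))" using ee by simp
    also have "\<dots> = AA u' + BB v'" using X3[of w'] uv' by simp
    finally show ?thesis .
  qed
  have d: "dot2 m (pk k (al u)) + dot2 m (pk k (be v)) = dot2 m (pk k (al u')) + dot2 m (pk k (be v'))"
    using dotF[of w] dotF[of w'] e uv uv' by simp
  have uu: "u = u'"
  proof (rule ccontr)
    assume "u \<noteq> u'"
    then consider "u < u'" | "u' < u" by linarith
    then show False
    proof cases
      case 1
      have "AA u < AA u'" using AA_mono[OF I4(1,3) 1] .
      then have "BB v' < BB v" using z by simp
      then have "v' < v" using BB_le[OF I4(2,4)] by (meson not_less)
      then have "dot2 m (pk k (be v)) < dot2 m (pk k (be v'))" using gm_mono[OF J4(4,2)] by simp
      moreover have "dot2 m (pk k (al u)) < dot2 m (pk k (al u'))" using fm_mono[OF J4(1,3) 1] .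
      ultimately show False using d by simp
    next
      case 2
      have "AA u' < AA u" using AA_mono[OF I4(3,1) 2] .
      then have "BB v < BB v'" using z by simp
      then have "v < v'" using BB_le[OF I4(4,2)] by (meson not_less)
      then have "dot2 m (pk k (be v')) < dot2 m (pk k (be v))" using gm_mono[OF J4(2,4)] by simp
      moreover have "dot2 m (pk k (al u')) < dot2 m (pk k (al u))" using fm_mono[OF J4(3,1) 2] .
      ultimately show False using d by simp
    qed
  qed
  have "BB v = BB v'" using z uu by simp
  then have "v = v'"
    using BB_mono[OF I4(2,4)] BB_mono[OF I4(4,2)] by (metis less_irrefl linorder_neqE_linordered_idom)
  then show "w = w'" using uu uv uv' by simp
qed

lemma F_deriv: "w \<in> J \<times> J \<Longrightarrow> (F has_derivative DF w) (at w)"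
proof -
  assume w: "w \<in> J \<times> J"
  have "((\<lambda>w. pk k (X w)) has_derivative (\<lambda>h. pk k (fst h *\<^sub>R a (fst w) + snd h *\<^sub>R b (snd w)))) (at w)"
    using bounded_linear.has_derivative[OF bounded_linear_pk X_deriv] w JJI by blast
  then show ?thesis unfolding F_def[abs_def] DF_def[abs_def]
    by (rule has_derivative_eq_rhs) (simp add: fun_eq_iff pk_add pk_scale)
qed

lemma F_cont: "continuous_on W F"
  using F_deriv W(2) by (intro hd_cont) blast

lemma DF_Lg: "w \<in> J \<times> J \<Longrightarrow> DF w \<circ> Lg w = id"
proof -
  assume w: "w \<in> J \<times> J"
  have D: "Dt k w \<noteq> 0" using Dt_nz[OF w] .
  show ?thesis
  proof
    fix y :: "real \<times> real"
    have e: "pk k (a (fst w)) = (P1 k w, P2 k w)" "pk k (b (snd w)) = (R1 k w, R2 k w)"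
      by (simp_all add: P1_def P2_def R1_def R2_def)
    have dd: "Dt k w = P1 k w * R2 k w - P2 k w * R1 k w" by (simp add: Dt_def)
    note i = inv2[OF dd D, of "fst y" "snd y"]
    show "(DF w \<circ> Lg w) y = id y"
      using i by (simp add: DF_def Lg_def e g11_def g12_def g21_def g22_def prod_eq_iff)
  qed
qed

lemma bl_Lg: "bounded_linear (Lg w)"
proof -
  have "bounded_linear (\<lambda>y::real\<times>real. fst y * g11 w + snd y * g12 w)"
    by (intro bounded_linear_add bounded_linear_compose[OF bounded_linear_mult_left bounded_linear_fst]
        bounded_linear_compose[OF bounded_linear_mult_left bounded_linear_snd])
  moreover have "bounded_linear (\<lambda>y::real\<times>real. fst y * g21 w + snd y * g22 w)"
    by (intro bounded_linear_add bounded_linear_compose[OF bounded_linear_mult_left bounded_linear_fst]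
        bounded_linear_compose[OF bounded_linear_mult_left bounded_linear_snd])
  ultimately show ?thesis unfolding Lg_def[abs_def] by (rule bounded_linear_Pair)
qed

lemma G_F: "w \<in> W \<Longrightarrow> G (F w) = w"
  unfolding G_def using inj_on_subset[OF F_inj W(2)] by (simp add: inv_into_f_f)

lemma G_deriv: "w \<in> W \<Longrightarrow> (G has_derivative Lg w) (at (F w))"
proof -
  assume w: "w \<in> W"
  have wJ: "w \<in> J \<times> J" using w W(2) by blast
  show ?thesis
    by (rule has_derivative_inverse_strong[OF W(1) w F_cont _ F_deriv[OF wJ] DF_Lg[OF wJ]]) (rule G_F)
qed

lemma U_open: "open U"
proof -
  have "U \<subseteq> interior U"
  proof
    fix y assume "y \<in> U"
    then obtain w where w: "w \<in> W" "y = F w" unfolding U_def by blast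
    have wJ: "w \<in> J \<times> J" using w W(2) by blast
    have "F w \<in> interior (F ` W)"
      by (rule sussmann_open_mapping[OF W(1) F_cont w(1) F_deriv[OF wJ] bl_Lg DF_Lg[OF wJ] subset_refl])
         (simp add: interior_open[OF W(1)] w(1))
    then show "y \<in> interior U" using w by (simp add: U_def)
  qed
  then have "interior U = U" using interior_subset by blast
  then show ?thesis by (metis open_interior)
qed

lemma G_U: "y \<in> U \<Longrightarrow> G y \<in> W \<and> F (G y) = y"
  unfolding U_def using G_F by auto

lemma G_deriv_U: "y \<in> U \<Longrightarrow>
  (G has_derivative (\<lambda>h. (fst h * g11 (G y) + snd h * g12 (G y), fst h * g21 (G y) + snd h * g22 (G y)))) (at y)"
  using G_deriv[of "G y"] G_U[of y] unfolding Lg_def by auto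

lemma G_cont: "continuous_on U G"
  using G_deriv_U by (intro hd_cont) blast

lemma cW: "continuous_on W (P1 k)" "continuous_on W (P2 k)" "continuous_on W (R1 k)" "continuous_on W (R2 k)"
  "continuous_on W (Dt k)" "continuous_on W (Aj k)" "continuous_on W (Bj k)"
  using C1on_cont[OF C1_P1[OF WI]] C1on_cont[OF C1_P2[OF WI]] C1on_cont[OF C1_R1[OF WI]]
    C1on_cont[OF C1_R2[OF WI]] C1on_cont[OF C1_Dt[OF WI]] C1on_cont[OF C1_Aj[OF WI]] C1on_cont[OF C1_Bj[OF WI]]
  by auto

lemma DtW: "w \<in> W \<Longrightarrow> Dt k w \<noteq> 0" using Dt_nz W(2) by blast

lemma comp_U: "continuous_on W f \<Longrightarrow> continuous_on U (\<lambda>y. f (G y))"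
  by (rule continuous_on_compose2[OF _ G_cont]) (use G_U in auto)

lemma g_cont: "continuous_on U (\<lambda>y. g11 (G y))" "continuous_on U (\<lambda>y. g12 (G y))"
  "continuous_on U (\<lambda>y. g21 (G y))" "continuous_on U (\<lambda>y. g22 (G y))"
proof -
  have "continuous_on W g11" "continuous_on W g12" "continuous_on W g21" "continuous_on W g22"
    unfolding g11_def[abs_def] g12_def[abs_def] g21_def[abs_def] g22_def[abs_def]
    using cW DtW by (auto intro!: continuous_on_divide continuous_on_minus)
  then show "continuous_on U (\<lambda>y. g11 (G y))" "continuous_on U (\<lambda>y. g12 (G y))"
    "continuous_on U (\<lambda>y. g21 (G y))" "continuous_on U (\<lambda>y. g22 (G y))" using comp_U by auto
qed

lemma HD_Xj: "HD W (\<lambda>w. comp3 k (X w)) (Aj k) (Bj k)"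
  unfolding HD_def
proof (intro conjI ballI)
  show "continuous_on W (Aj k)" "continuous_on W (Bj k)" using cW by auto
  fix w assume w: "w \<in> W"
  have "((\<lambda>w. comp3 k (X w)) has_derivative (\<lambda>h. comp3 k (fst h *\<^sub>R a (fst w) + snd h *\<^sub>R b (snd w)))) (at w)"
    using bounded_linear.has_derivative[OF bounded_linear_comp3 X_deriv] w WI by blast
  then show "((\<lambda>w. comp3 k (X w)) has_derivative (\<lambda>h. fst h * Aj k w + snd h * Bj k w)) (at w)"
    by (rule has_derivative_eq_rhs) (simp add: fun_eq_iff comp3_add comp3_scale Aj_def Bj_def)
qed

end

context chartctx
begin

definition f1 :: "real \<times> real \<Rightarrow> real" where "f1 y = g11 (G y) * Aj k (G y) + g21 (G y) * Bj k (G y)"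
definition f2 :: "real \<times> real \<Rightarrow> real" where "f2 y = g12 (G y) * Aj k (G y) + g22 (G y) * Bj k (G y)"

lemma HD_psi: "HD U psi f1 f2"
proof -
  have "HD U (\<lambda>y. (\<lambda>w. comp3 k (X w)) (G y)) f1 f2"
    unfolding f1_def[abs_def] f2_def[abs_def]
    by (rule HD_comp[OF HD_Xj _ G_deriv_U g_cont]) (use G_U in auto)
  then show ?thesis unfolding psi_def[abs_def] by simp
qed

lemma f1_eq: "w \<in> W \<Longrightarrow> g11 w * Aj k w + g21 w * Bj k w = Phi1 k w"
  using DtW[of w] by (simp add: g11_def g21_def Phi1_def field_simps)
lemma f2_eq: "w \<in> W \<Longrightarrow> g12 w * Aj k w + g22 w * Bj k w = Phi2 k w"
  using DtW[of w] by (simp add: g12_def g22_def Phi2_def field_simps)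

lemma Phi_rel1: "w \<in> W \<Longrightarrow> Phi1 k w * P1 k w + Phi2 k w * P2 k w = Aj k w"
proof -
  assume w: "w \<in> W"
  have "Phi1 k w * P1 k w + Phi2 k w * P2 k w = Aj k w * (P1 k w * R2 k w - P2 k w * R1 k w) / Dt k w"
    by (simp add: Phi1_def Phi2_def add_divide_distrib[symmetric] algebra_simps)
  also have "\<dots> = Aj k w" using DtW[OF w] by (simp add: Dt_def)
  finally show ?thesis .
qed

lemma Phi_rel2: "w \<in> W \<Longrightarrow> Phi1 k w * R1 k w + Phi2 k w * R2 k w = Bj k w"
proof -
  assume w: "w \<in> W"
  have "Phi1 k w * R1 k w + Phi2 k w * R2 k w = Bj k w * (P1 k w * R2 k w - P2 k w * R1 k w) / Dt k w"
    by (simp add: Phi1_def Phi2_def add_divide_distrib[symmetric] algebra_simps)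
  also have "\<dots> = Bj k w" using DtW[OF w] by (simp add: Dt_def)
  finally show ?thesis .
qed

lemma nullP: "w \<in> W \<Longrightarrow> (Aj k w)^2 + (P1 k w)^2 - (P2 k w)^2 = 0"
  using null_k[OF k, of "a (fst w)"] aa[of "fst w"] WI by (auto simp: Aj_def P1_def P2_def)
lemma nullR: "w \<in> W \<Longrightarrow> (Bj k w)^2 + (R1 k w)^2 - (R2 k w)^2 = 0"
  using null_k[OF k, of "b (snd w)"] bb[of "snd w"] WI by (auto simp: Bj_def R1_def R2_def)

lemma rels:
  assumes h1: "HD W (Phi1 k) fu1 fv1" and h2: "HD W (Phi2 k) fu2 fv2" and w: "w \<in> W"
  shows "fv1 w * P1 k w + fv2 w * P2 k w = 0" "fu1 w * R1 k w + fu2 w * R2 k w = 0"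
proof -
  have wI: "fst w \<in> I" "snd w \<in> I" using w WI by auto
  have d1: "(Phi1 k has_derivative (\<lambda>h. fst h * fu1 w + snd h * fv1 w)) (at w)" using h1 w unfolding HD_def by blast
  have d2: "(Phi2 k has_derivative (\<lambda>h. fst h * fu2 w + snd h * fv2 w)) (at w)" using h2 w unfolding HD_def by blast
  have E1: "((\<lambda>x. Phi1 k x * P1 k x + Phi2 k x * P2 k x - Aj k x) has_derivative
     (\<lambda>h. (Phi1 k w * (fst h * fst (pk k (a' (fst w)))) + (fst h * fu1 w + snd h * fv1 w) * P1 k w)
        + (Phi2 k w * (fst h * snd (pk k (a' (fst w)))) + (fst h * fu2 w + snd h * fv2 w) * P2 k w)
        - fst h * comp3 k (a' (fst w)))) (at w)"
    by (intro has_derivative_diff has_derivative_add has_derivative_mult d1 d2 P1_deriv P2_deriv Aj_deriv wI)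
  have "(\<lambda>h. (Phi1 k w * (fst h * fst (pk k (a' (fst w)))) + (fst h * fu1 w + snd h * fv1 w) * P1 k w)
        + (Phi2 k w * (fst h * snd (pk k (a' (fst w)))) + (fst h * fu2 w + snd h * fv2 w) * P2 k w)
        - fst h * comp3 k (a' (fst w))) (0,1) = 0"
    by (rule deriv_zero_on_open[OF W(1) w _ E1]) (simp add: Phi_rel1)
  then show "fv1 w * P1 k w + fv2 w * P2 k w = 0" by simp
  have E2: "((\<lambda>x. Phi1 k x * R1 k x + Phi2 k x * R2 k x - Bj k x) has_derivative
     (\<lambda>h. (Phi1 k w * (snd h * fst (pk k (b' (snd w)))) + (fst h * fu1 w + snd h * fv1 w) * R1 k w)
        + (Phi2 k w * (snd h * snd (pk k (b' (snd w)))) + (fst h * fu2 w + snd h * fv2 w) * R2 k w)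
        - snd h * comp3 k (b' (snd w)))) (at w)"
    by (intro has_derivative_diff has_derivative_add has_derivative_mult d1 d2 R1_deriv R2_deriv Bj_deriv wI)
  have "(\<lambda>h. (Phi1 k w * (snd h * fst (pk k (b' (snd w)))) + (fst h * fu1 w + snd h * fv1 w) * R1 k w)
        + (Phi2 k w * (snd h * snd (pk k (b' (snd w)))) + (fst h * fu2 w + snd h * fv2 w) * R2 k w)
        - snd h * comp3 k (b' (snd w))) (1,0) = 0"
    by (rule deriv_zero_on_open[OF W(1) w _ E2]) (simp add: Phi_rel2)
  then show "fu1 w * R1 k w + fu2 w * R2 k w = 0" by simp
qed

lemma psi_BI: "born_infeld U psi"
proof -
  obtain fu1 fv1 where h1: "HD W (Phi1 k) fu1 fv1" using C1on_HD[OF C1_Phi1[OF WI DtW]] by blast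
  obtain fu2 fv2 where h2: "HD W (Phi2 k) fu2 fv2" using C1on_HD[OF C1_Phi2[OF WI DtW]] by blast
  define h11 where "h11 y = g11 (G y) * fu1 (G y) + g21 (G y) * fv1 (G y)" for y
  define h12 where "h12 y = g12 (G y) * fu1 (G y) + g22 (G y) * fv1 (G y)" for y
  define h21 where "h21 y = g11 (G y) * fu2 (G y) + g21 (G y) * fv2 (G y)" for y
  define h22 where "h22 y = g12 (G y) * fu2 (G y) + g22 (G y) * fv2 (G y)" for y
  have a1: "HD U (\<lambda>y. Phi1 k (G y)) h11 h12"
    unfolding h11_def[abs_def] h12_def[abs_def]
    by (rule HD_comp[OF h1 _ G_deriv_U g_cont]) (use G_U in auto)
  have a2: "HD U (\<lambda>y. Phi2 k (G y)) h21 h22"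
    unfolding h21_def[abs_def] h22_def[abs_def]
    by (rule HD_comp[OF h2 _ G_deriv_U g_cont]) (use G_U in auto)
  have b1: "HD U f1 h11 h12" by (rule HD_cong[OF U_open a1]) (simp add: f1_def f1_eq G_U)
  have b2: "HD U f2 h21 h22" by (rule HD_cong[OF U_open a2]) (simp add: f2_def f2_eq G_U)
  note C = C2_from_HD[OF U_open HD_psi b1 b2]
  have eq: "(1 - (pv psi y)\<^sup>2) * pu (pu psi) y + 2 * pu psi y * pv psi y * pv (pu psi) y
              - (1 + (pu psi y)\<^sup>2) * pv (pv psi) y = 0" if y: "y \<in> U" for y
  proof -
    define w where "w = G y"
    have w: "w \<in> W" using G_U[OF y] by (simp add: w_def)
    have wJ: "w \<in> J \<times> J" using w W(2) by blast
    have vals: "pu psi y = Phi1 k w" "pv psi y = Phi2 k w"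
      "pu (pu psi) y = h11 y" "pv (pu psi) y = h12 y" "pv (pv psi) y = h22 y"
      using C(2)[OF y] f1_eq[OF w] f2_eq[OF w] by (simp_all add: f1_def f2_def w_def)
    have D: "Dt k w \<noteq> 0" using DtW[OF w] .
    have p2: "P2 k w \<noteq> 0" using sgP2[OF wJ] by auto
    have r2: "R2 k w \<noteq> 0" using sgR2[OF wJ] by auto
    have Qp: "(Phi1 k w * P1 k w + Phi2 k w * P2 k w)^2 + (P1 k w)^2 - (P2 k w)^2 = 0"
      using Phi_rel1[OF w] nullP[OF w] by simp
    have Qr: "(Phi1 k w * R1 k w + Phi2 k w * R2 k w)^2 + (R1 k w)^2 - (R2 k w)^2 = 0"
      using Phi_rel2[OF w] nullR[OF w] by simp
    note r = rels[OF h1 h2 w]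
    have R1': "fv1 w * P1 k w + fv2 w * P2 k w = 0" using r(1) .
    have R2': "fu1 w * R1 k w + fu2 w * R2 k w = 0" using r(2) .
    have DD: "P1 k w * R2 k w - P2 k w * R1 k w \<noteq> 0" using D by (simp add: Dt_def)
    note B = bi_alg[OF DD p2 r2 Qp Qr R1' R2']
    have e11: "h11 y = (fu1 w * R2 k w - fv1 w * P2 k w) / (P1 k w * R2 k w - P2 k w * R1 k w)"
      by (simp add: h11_def w_def[symmetric] g11_def g21_def Dt_def diff_divide_distrib algebra_simps)
    have e12: "h12 y = (fv1 w * P1 k w - fu1 w * R1 k w) / (P1 k w * R2 k w - P2 k w * R1 k w)"
      by (simp add: h12_def w_def[symmetric] g12_def g22_def Dt_def diff_divide_distrib algebra_simps)
    have e22: "h22 y = (fv2 w * P1 k w - fu2 w * R1 k w) / (P1 k w * R2 k w - P2 k w * R1 k w)"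
      by (simp add: h22_def w_def[symmetric] g12_def g22_def Dt_def diff_divide_distrib algebra_simps)
    show ?thesis using B unfolding vals e11 e12 e22 by (simp add: algebra_simps)
  qed
  show ?thesis unfolding born_infeld_def using U_open C(1) eq by blast
qed

lemma graph_F: "w \<in> W \<Longrightarrow> graph_pt k psi (F w) = X w"
  unfolding F_def using graph_pt_pk[OF k, of psi "X w"] G_F[of w] by (simp add: psi_def F_def)

end

lemma span_orth:
  fixes T1 T2 A B n :: R3
  assumes t1: "T1 = c1 *\<^sub>R A + c2 *\<^sub>R B" and t2: "T2 = c3 *\<^sub>R A + c4 *\<^sub>R B"
    and ind: "\<And>x y. x *\<^sub>R T1 = y *\<^sub>R T2 \<Longrightarrow> x = 0 \<and> y = 0"
    and o1: "lor n T1 = 0" and o2: "lor n T2 = 0"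
  shows "lor n A = 0 \<and> lor n B = 0"
proof (cases "c1 * c4 - c2 * c3 = 0")
  case True
  have "c4 *\<^sub>R T1 - c2 *\<^sub>R T2 = (c1 * c4 - c2 * c3) *\<^sub>R A"
    by (simp add: t1 t2 algebra_simps)
  then have "c4 *\<^sub>R T1 = c2 *\<^sub>R T2" using True by simp
  then have c42: "c4 = 0" "c2 = 0" using ind by auto
  have "c3 *\<^sub>R T1 - c1 *\<^sub>R T2 = (c3 * c2 - c1 * c4) *\<^sub>R B"
    by (simp add: t1 t2 algebra_simps)
  then have "c3 *\<^sub>R T1 = c1 *\<^sub>R T2" using True by (simp add: algebra_simps)
  then have c31: "c3 = 0" "c1 = 0" using ind by auto
  have "1 *\<^sub>R T1 = 0 *\<^sub>R T2" using t1 c42 c31 by simp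
  then show ?thesis using ind by fastforce
next
  case False
  have e1: "c1 * lor n A + c2 * lor n B = 0" using o1 by (simp add: t1 lor_lin)
  have e2: "c3 * lor n A + c4 * lor n B = 0" using o2 by (simp add: t2 lor_lin)
  have "(c1 * c4 - c2 * c3) * lor n A = c4 * (c1 * lor n A + c2 * lor n B) - c2 * (c3 * lor n A + c4 * lor n B)"
    by (simp add: algebra_simps)
  then have "lor n A = 0" using e1 e2 False by simp
  moreover have "(c1 * c4 - c2 * c3) * lor n B = c1 * (c3 * lor n A + c4 * lor n B) - c3 * (c1 * lor n A + c2 * lor n B)"
    by (simp add: algebra_simps)
  then have "lor n B = 0" using e1 e2 False by simp
  ultimately show ?thesis by simp
qed

definition T1v :: "nat \<Rightarrow> real \<Rightarrow> R3" where
  "T1v k d = (if k = 1 then (d, 1, 0) else if k = 2 then (1, d, 0) else (1, 0, d))"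
definition T2v :: "nat \<Rightarrow> real \<Rightarrow> R3" where
  "T2v k d = (if k = 1 then (d, 0, 1) else if k = 2 then (0, d, 1) else (0, 1, d))"

lemma T_ind: "x *\<^sub>R T1v k d1 = y *\<^sub>R T2v k d2 \<Longrightarrow> x = 0 \<and> y = 0"
  by (auto simp: T1v_def T2v_def split: if_splits)

lemma gn_orth: "lor (graph_normal k \<psi> q) (T1v k (pu \<psi> q)) = 0" "lor (graph_normal k \<psi> q) (T2v k (pv \<psi> q)) = 0"
  by (auto simp: graph_normal_def T1v_def T2v_def lor_def)

lemma gn_nz: "graph_normal k \<psi> q \<noteq> 0"
  by (auto simp: graph_normal_def zero_prod_def)

lemma curve1_deriv:
  assumes "((\<lambda>s. \<psi> (s, y)) has_real_derivative d) (at x)"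
  shows "((\<lambda>s. graph_pt k \<psi> (s, y)) has_vector_derivative T1v k d) (at x)"
proof -
  have h: "((\<lambda>s. \<psi> (s, y)) has_vector_derivative d) (at x)"
    using assms by (simp add: has_real_derivative_iff_has_vector_derivative)
  have i: "((\<lambda>s::real. s) has_vector_derivative 1) (at x)" by (rule has_vector_derivative_id)
  have c: "((\<lambda>s::real. y) has_vector_derivative 0) (at x)" by (rule has_vector_derivative_const)
  show ?thesis
    unfolding graph_pt_def T1v_def
    by (cases "k = 1"; cases "k = 2") (auto intro!: has_vector_derivative_Pair h i c)
qed

lemma curve2_deriv:
  assumes "((\<lambda>s. \<psi> (x, s)) has_real_derivative d) (at y)"
  shows "((\<lambda>s. graph_pt k \<psi> (x, s)) has_vector_derivative T2v k d) (at y)"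
proof -
  have h: "((\<lambda>s. \<psi> (x, s)) has_vector_derivative d) (at y)"
    using assms by (simp add: has_real_derivative_iff_has_vector_derivative)
  have i: "((\<lambda>s::real. s) has_vector_derivative 1) (at y)" by (rule has_vector_derivative_id)
  have c: "((\<lambda>s::real. x) has_vector_derivative 0) (at y)" by (rule has_vector_derivative_const)
  show ?thesis
    unfolding graph_pt_def T2v_def
    by (cases "k = 1"; cases "k = 2") (auto intro!: has_vector_derivative_Pair h i c)
qed

lemma cont_ball:
  assumes "isCont f x" "open S" "f x \<in> S"
  shows "\<exists>e>0. \<forall>y\<in>ball x e. f y \<in> S"
proof -
  have "(f \<longlongrightarrow> f x) (at x)" using assms(1) by (simp add: isCont_def)
  then have "eventually (\<lambda>y. f y \<in> S) (at x)" using assms(2,3) by (simp add: tendsto_def)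
  then obtain d where d: "d > 0" "\<And>y. y \<noteq> x \<Longrightarrow> dist y x < d \<Longrightarrow> f y \<in> S"
    unfolding eventually_at by auto
  have "\<forall>y\<in>ball x d. f y \<in> S"
  proof
    fix y assume "y \<in> ball x d"
    then show "f y \<in> S" using d assms(3) by (cases "y = x") (auto simp: dist_commute)
  qed
  then show ?thesis using d(1) by blast
qed

context surf
begin

definition W0 :: "real \<Rightarrow> (real \<times> real) set" where "W0 t0 = {w \<in> Om. X w \<in> slab t0}"

lemma X_cont_Om: "continuous_on Om X"
  using X_deriv Om_sub by (intro hd_cont) blast

lemma W0_open: "open (W0 t0)"
proof -
  have "W0 t0 = Om \<inter> X -` slab t0" by (auto simp: W0_def)
  then show ?thesis using continuous_on_open_vimage[OF Om_open] X_cont_Om slab_open by (metis Int_commute)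
qed

lemma W0_sub: "t0 \<in> I \<Longrightarrow> W0 t0 \<subseteq> ball t0 (4 * dl t0) \<times> ball t0 (4 * dl t0)"
proof
  fix w assume t0: "t0 \<in> I" and "w \<in> W0 t0"
  then have w: "w \<in> Om" "X w \<in> slab t0" by (auto simp: W0_def)
  have "\<bar>fst w - t0\<bar> < 4 * dl t0" "\<bar>snd w - t0\<bar> < 4 * dl t0" using confine[OF t0 w] by auto
  then show "w \<in> ball t0 (4 * dl t0) \<times> ball t0 (4 * dl t0)"
    by (simp add: mem_Times_iff dist_real_def abs_minus_commute)
qed

lemma chart_at:
  assumes t0: "t0 \<in> I"
  shows "\<exists>k U \<psi> G L. BI_chart SS (slab t0) k U \<psi> \<and> (\<forall>q\<in>SS \<inter> slab t0. X (G (pk k q)) = q)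
     \<and> (G has_derivative L) (at (pk k (X (t0, t0)))) \<and> G (pk k (X (t0, t0))) = (t0, t0)"
proof -
  define J0 where "J0 = ball t0 (4 * dl t0)"
  have g: "good J0" unfolding J0_def by (rule ball4_good[OF t0])
  then obtain k m where J0I: "J0 \<subseteq> I" and k: "k \<in> {1,2}"
    and ms: "\<And>s. s \<in> J0 \<Longrightarrow> dot2 m (pk k (a s)) > 0 \<and> dot2 m (pk k (b s)) < 0"
    unfolding good_def by blast
  have ax: "chartctx I al be a b a' b' J0 k m (W0 t0)"
  proof (intro chartctx.intro surf_axioms chartctx_axioms.intro)
    show "is_interval J0" unfolding J0_def by (rule is_interval_ball_real)
    show "J0 \<subseteq> I" by fact
    show "k \<in> {1,2}" by fact
    show "\<And>s. s \<in> J0 \<Longrightarrow> dot2 m (pk k (a s)) > 0 \<and> dot2 m (pk k (b s)) < 0" by (rule ms)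
    show "open (W0 t0)" by (rule W0_open)
    show "W0 t0 \<subseteq> J0 \<times> J0" unfolding J0_def by (rule W0_sub[OF t0])
  qed
  interpret C: chartctx I al be a b a' b' J0 k m "W0 t0" by (rule ax)
  have SV: "SS \<inter> slab t0 = X ` W0 t0" by (auto simp: SS_def W0_def)
  have gr: "SS \<inter> slab t0 = graph_pt k C.psi ` C.U"
  proof -
    have "X ` W0 t0 = (\<lambda>w. graph_pt k C.psi (C.F w)) ` W0 t0" using C.graph_F by auto
    also have "\<dots> = graph_pt k C.psi ` C.U" unfolding C.U_def by (simp add: image_image)
    finally show ?thesis using SV by simp
  qed
  have chart: "BI_chart SS (slab t0) k C.U C.psi"
    unfolding BI_chart_def using slab_open k C.psi_BI gr by auto
  have inv: "\<forall>q\<in>SS \<inter> slab t0. X (C.G (pk k q)) = q"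
  proof
    fix q assume "q \<in> SS \<inter> slab t0"
    then obtain w where w: "w \<in> W0 t0" "q = X w" using SV by auto
    then show "X (C.G (pk k q)) = q" using C.G_F[OF w(1)] by (simp add: C.F_def)
  qed
  have tt: "(t0, t0) \<in> W0 t0"
    unfolding W0_def using diag_Om[OF t0] in_slab[OF t0, of "(t0,t0)"] dl_pos[OF t0] by auto
  have "(C.G has_derivative C.Lg (t0,t0)) (at (pk k (X (t0, t0))))"
    using C.G_deriv[OF tt] by (simp add: C.F_def)
  moreover have "C.G (pk k (X (t0, t0))) = (t0, t0)" using C.G_F[OF tt] by (simp add: C.F_def)
  ultimately show ?thesis using chart inv by blast
qed

lemma tangent:
  assumes t: "t \<in> I" and g: "(\<gamma> has_vector_derivative \<gamma>') (at s0)"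
    and e: "e > 0" "\<And>s. s \<in> ball s0 e \<Longrightarrow> \<gamma> s \<in> SS \<inter> slab t" and g0: "\<gamma> s0 = X (t, t)"
  shows "\<exists>c1 c2. \<gamma>' = c1 *\<^sub>R a t + c2 *\<^sub>R b t"
proof -
  obtain k U \<psi> G L where ch: "BI_chart SS (slab t) k U \<psi>" and inv: "\<forall>q\<in>SS \<inter> slab t. X (G (pk k q)) = q"
    and dG: "(G has_derivative L) (at (pk k (X (t, t))))" and G0: "G (pk k (X (t, t))) = (t, t)"
    using chart_at[OF t] by blast
  have bL: "bounded_linear L" using dG by (rule has_derivative_bounded_linear)
  have d1: "((\<lambda>s. pk k (\<gamma> s)) has_derivative (\<lambda>h. pk k (h *\<^sub>R \<gamma>'))) (at s0)"
    using bounded_linear.has_derivative[OF bounded_linear_pk g[unfolded has_vector_derivative_def]] .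
  have dG': "(G has_derivative L) (at (pk k (\<gamma> s0)))" using dG g0 by simp
  have d2: "((\<lambda>s. G (pk k (\<gamma> s))) has_derivative (\<lambda>h. L (pk k (h *\<^sub>R \<gamma>')))) (at s0)"
    using has_derivative_compose[OF d1 dG'] .
  have tI: "(t, t) \<in> I \<times> I" using t by simp
  have dX: "(X has_derivative (\<lambda>h. fst h *\<^sub>R a t + snd h *\<^sub>R b t)) (at (G (pk k (\<gamma> s0))))"
    using X_deriv[OF tI] G0 g0 by simp
  define v where "v = L (pk k \<gamma>')"
  have d3: "((\<lambda>s. X (G (pk k (\<gamma> s)))) has_derivative
      (\<lambda>h. fst (L (pk k (h *\<^sub>R \<gamma>'))) *\<^sub>R a t + snd (L (pk k (h *\<^sub>R \<gamma>'))) *\<^sub>R b t)) (at s0)"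
    using has_derivative_compose[OF d2 dX] .
  have lin: "\<And>h. L (pk k (h *\<^sub>R \<gamma>')) = h *\<^sub>R v"
    unfolding v_def pk_scale by (rule linear.scaleR[OF bounded_linear.linear[OF bL]])
  have d4: "((\<lambda>s. X (G (pk k (\<gamma> s)))) has_derivative
      (\<lambda>h. h *\<^sub>R (fst v *\<^sub>R a t + snd v *\<^sub>R b t))) (at s0)"
    using d3 by (rule has_derivative_eq_rhs) (simp add: fun_eq_iff lin algebra_simps)
  have d5: "(\<gamma> has_derivative (\<lambda>h. h *\<^sub>R (fst v *\<^sub>R a t + snd v *\<^sub>R b t))) (at s0)"
  proof (rule has_derivative_transform_within_open[OF d4 open_ball])
    show "s0 \<in> ball s0 e" using e(1) by simp
    fix s assume "s \<in> ball s0 e"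
    then show "X (G (pk k (\<gamma> s))) = \<gamma> s" using inv e(2) by blast
  qed
  have "(\<lambda>h. h *\<^sub>R \<gamma>') = (\<lambda>h. h *\<^sub>R (fst v *\<^sub>R a t + snd v *\<^sub>R b t))"
    using has_derivative_unique[OF g[unfolded has_vector_derivative_def] d5] .
  then have "\<gamma>' = fst v *\<^sub>R a t + snd v *\<^sub>R b t" by (metis scaleR_one)
  then show ?thesis by blast
qed

end

context surf
begin

lemma SS_general: "BI_general_surface SS"
  unfolding BI_general_surface_def
proof
  fix p assume "p \<in> SS"
  then obtain w where w: "w \<in> Om" "p = X w" unfolding SS_def by blast
  then obtain t0 where t0: "t0 \<in> I" "fst w \<in> ball t0 (dl t0)" "snd w \<in> ball t0 (dl t0)" unfolding Om_def by blast
  have "p \<in> slab t0" using in_slab[OF t0(1), of w] t0 w(2) by (simp add: mem_Times_iff)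
  moreover obtain k U \<psi> where "BI_chart SS (slab t0) k U \<psi>" using chart_at[OF t0(1)] by blast
  ultimately show "\<exists>V k U \<psi>. p \<in> V \<and> BI_chart SS V k U \<psi>" by blast
qed

lemma diag_SS: "t \<in> I \<Longrightarrow> X (t, t) \<in> SS"
  unfolding SS_def using diag_Om by blast

lemma near_SS:
  fixes \<gamma> :: "real \<Rightarrow> R3" and s0 :: real and q :: "real \<times> real"
  assumes t: "t \<in> I" and ch: "BI_chart SS V k' U' \<psi>'" and q: "q \<in> U'"
    and gq: "graph_pt k' \<psi>' q = X (t, t)"
    and gam: "(\<gamma> has_vector_derivative \<gamma>') (at s0)" and g0: "\<gamma> s0 = X (t, t)"
    and inU: "\<And>e. e > 0 \<Longrightarrow> \<exists>e'>0. \<forall>s\<in>ball s0 e'. \<gamma> s \<in> graph_pt k' \<psi>' ` (U' \<inter> ball q e)"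
  shows "\<exists>c1 c2. \<gamma>' = c1 *\<^sub>R a t + c2 *\<^sub>R b t"
proof -
  have bi: "born_infeld U' \<psi>'" and gr: "SS \<inter> V = graph_pt k' \<psi>' ` U'" using ch unfolding BI_chart_def by auto
  obtain e1 where e1: "e1 > 0" "\<forall>s\<in>ball s0 e1. \<gamma> s \<in> graph_pt k' \<psi>' ` (U' \<inter> ball q 1)"
    using inU[of 1] by auto
  have sl: "X (t, t) \<in> slab t" using in_slab[OF t, of "(t,t)"] dl_pos[OF t] by simp
  have ic: "isCont \<gamma> s0" using gam by (rule has_vector_derivative_continuous)
  have "\<gamma> s0 \<in> slab t" using sl g0 by simp
  then obtain e2 where e2: "e2 > 0" "\<forall>s\<in>ball s0 e2. \<gamma> s \<in> slab t"
    using cont_ball[OF ic slab_open] by blast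
  define e where "e = min e1 e2"
  have "e > 0" using e1 e2 by (simp add: e_def)
  moreover have "\<And>s. s \<in> ball s0 e \<Longrightarrow> \<gamma> s \<in> SS \<inter> slab t"
  proof -
    fix s assume "s \<in> ball s0 e"
    then have s: "s \<in> ball s0 e1" "s \<in> ball s0 e2" by (auto simp: e_def)
    have "\<gamma> s \<in> graph_pt k' \<psi>' ` U'" using e1(2) s(1) by blast
    then have "\<gamma> s \<in> SS" using gr by blast
    then show "\<gamma> s \<in> SS \<inter> slab t" using e2(2) s(2) by blast
  qed
  ultimately show ?thesis using tangent[OF t gam _ _ g0] by blast
qed

lemma geod_orth:
  assumes t: "t \<in> I" and ch: "BI_chart SS V k' U' \<psi>'" and q: "q \<in> U'"
    and gq: "graph_pt k' \<psi>' q = X (t, t)"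
  shows "lor (graph_normal k' \<psi>' q) (a t) = 0 \<and> lor (graph_normal k' \<psi>' q) (b t) = 0"
proof -
  have bi: "born_infeld U' \<psi>'" using ch unfolding BI_chart_def by auto
  then have oU: "open U'" and c2: "C2_on U' \<psi>'" unfolding born_infeld_def by auto
  have hp: "has_partials_on U' \<psi>'" using c2 unfolding C2_on_def by auto
  have d1: "((\<lambda>s. \<psi>' (s, snd q)) has_real_derivative pu \<psi>' q) (at (fst q))"
    using hp q unfolding has_partials_on_def pu_def by (simp add: DERIV_deriv_iff_real_differentiable)
  have d2: "((\<lambda>s. \<psi>' (fst q, s)) has_real_derivative pv \<psi>' q) (at (snd q))"
    using hp q unfolding has_partials_on_def pv_def by (simp add: DERIV_deriv_iff_real_differentiable)
  obtain r where r: "r > 0" "ball q r \<subseteq> U'" using oU q open_contains_ball by blast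
  have tan1: "\<exists>c1 c2. T1v k' (pu \<psi>' q) = c1 *\<^sub>R a t + c2 *\<^sub>R b t"
  proof (rule near_SS[OF t ch q gq curve1_deriv[OF d1]])
    show "graph_pt k' \<psi>' (fst q, snd q) = X (t, t)" using gq by simp
    fix e :: real assume e: "e > 0"
    show "\<exists>e'>0. \<forall>s\<in>ball (fst q) e'. graph_pt k' \<psi>' (s, snd q) \<in> graph_pt k' \<psi>' ` (U' \<inter> ball q e)"
    proof (intro exI[of _ "min r e"] conjI ballI)
      show "min r e > 0" using r e by simp
      fix s assume "s \<in> ball (fst q) (min r e)"
      then have "(s, snd q) \<in> ball q (min r e)"
        by (cases q) (simp add: dist_Pair_Pair dist_commute)
      then have "(s, snd q) \<in> U' \<inter> ball q e" using r by auto
      then show "graph_pt k' \<psi>' (s, snd q) \<in> graph_pt k' \<psi>' ` (U' \<inter> ball q e)" by blast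
    qed
  qed
  have tan2: "\<exists>c1 c2. T2v k' (pv \<psi>' q) = c1 *\<^sub>R a t + c2 *\<^sub>R b t"
  proof (rule near_SS[OF t ch q gq curve2_deriv[OF d2]])
    show "graph_pt k' \<psi>' (fst q, snd q) = X (t, t)" using gq by simp
    fix e :: real assume e: "e > 0"
    show "\<exists>e'>0. \<forall>s\<in>ball (snd q) e'. graph_pt k' \<psi>' (fst q, s) \<in> graph_pt k' \<psi>' ` (U' \<inter> ball q e)"
    proof (intro exI[of _ "min r e"] conjI ballI)
      show "min r e > 0" using r e by simp
      fix s assume "s \<in> ball (snd q) (min r e)"
      then have "(fst q, s) \<in> ball q (min r e)"
        by (cases q) (simp add: dist_Pair_Pair dist_commute)
      then have "(fst q, s) \<in> U' \<inter> ball q e" using r by auto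
      then show "graph_pt k' \<psi>' (fst q, s) \<in> graph_pt k' \<psi>' ` (U' \<inter> ball q e)" by blast
    qed
  qed
  obtain c1 c2 where h1: "T1v k' (pu \<psi>' q) = c1 *\<^sub>R a t + c2 *\<^sub>R b t" using tan1 by blast
  obtain c3 c4 where h2: "T2v k' (pv \<psi>' q) = c3 *\<^sub>R a t + c4 *\<^sub>R b t" using tan2 by blast
  show ?thesis by (rule span_orth[OF h1 h2 T_ind gn_orth])
qed

end

definition C1r :: "real set \<Rightarrow> (real \<Rightarrow> real) \<Rightarrow> bool" where
  "C1r I f \<longleftrightarrow> (\<exists>f'. continuous_on I f' \<and> (\<forall>t\<in>I. (f has_real_derivative f' t) (at t)))"

lemma C1r_cont: "C1r I f \<Longrightarrow> continuous_on I f"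
  unfolding C1r_def
proof (elim exE conjE)
  fix f' assume "\<forall>t\<in>I. (f has_real_derivative f' t) (at t)"
  then show "continuous_on I f"
    by (intro continuous_at_imp_continuous_on ballI) (auto intro: DERIV_isCont)
qed

lemma C1r_const: "C1r I (\<lambda>t. c)"
  unfolding C1r_def by (rule exI[of _ "\<lambda>t. 0"]) auto

lemma C1r_add: "C1r I f \<Longrightarrow> C1r I g \<Longrightarrow> C1r I (\<lambda>t. f t + g t)"
  unfolding C1r_def
proof (elim exE conjE)
  fix f' g' assume a: "continuous_on I f'" "\<forall>t\<in>I. (f has_real_derivative f' t) (at t)"
    "continuous_on I g'" "\<forall>t\<in>I. (g has_real_derivative g' t) (at t)"
  show "\<exists>h. continuous_on I h \<and> (\<forall>t\<in>I. ((\<lambda>t. f t + g t) has_real_derivative h t) (at t))"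
    using a by (intro exI[of _ "\<lambda>t. f' t + g' t"]) (auto intro!: continuous_on_add DERIV_add)
qed

lemma C1r_diff: "C1r I f \<Longrightarrow> C1r I g \<Longrightarrow> C1r I (\<lambda>t. f t - g t)"
  unfolding C1r_def
proof (elim exE conjE)
  fix f' g' assume a: "continuous_on I f'" "\<forall>t\<in>I. (f has_real_derivative f' t) (at t)"
    "continuous_on I g'" "\<forall>t\<in>I. (g has_real_derivative g' t) (at t)"
  show "\<exists>h. continuous_on I h \<and> (\<forall>t\<in>I. ((\<lambda>t. f t - g t) has_real_derivative h t) (at t))"
    using a by (intro exI[of _ "\<lambda>t. f' t - g' t"]) (auto intro!: continuous_on_diff DERIV_diff)
qed

lemma C1r_mult: "C1r I f \<Longrightarrow> C1r I g \<Longrightarrow> C1r I (\<lambda>t. f t * g t)"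
proof -
  assume cf: "C1r I f" and cg: "C1r I g"
  have ff: "continuous_on I f" "continuous_on I g" using cf cg C1r_cont by auto
  obtain f' where a1: "continuous_on I f'" "\<forall>t\<in>I. (f has_real_derivative f' t) (at t)" using cf unfolding C1r_def by blast
  obtain g' where a2: "continuous_on I g'" "\<forall>t\<in>I. (g has_real_derivative g' t) (at t)" using cg unfolding C1r_def by blast
  show ?thesis unfolding C1r_def
    using a1 a2 ff by (intro exI[of _ "\<lambda>t. f' t * g t + g' t * f t"]) (auto intro!: continuous_intros DERIV_mult)
qed

lemma C1r_divide: "C1r I f \<Longrightarrow> C1r I g \<Longrightarrow> (\<And>t. t \<in> I \<Longrightarrow> g t \<noteq> 0) \<Longrightarrow> C1r I (\<lambda>t. f t / g t)"
proof -
  assume cf: "C1r I f" and cg: "C1r I g" and nz: "\<And>t. t \<in> I \<Longrightarrow> g t \<noteq> 0"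
  have ff: "continuous_on I f" "continuous_on I g" using cf cg C1r_cont by auto
  obtain f' where a1: "continuous_on I f'" "\<forall>t\<in>I. (f has_real_derivative f' t) (at t)" using cf unfolding C1r_def by blast
  obtain g' where a2: "continuous_on I g'" "\<forall>t\<in>I. (g has_real_derivative g' t) (at t)" using cg unfolding C1r_def by blast
  show ?thesis unfolding C1r_def
    using a1 a2 ff nz
    by (intro exI[of _ "\<lambda>t. (f' t * g t - f t * g' t) / (g t * g t)"])
       (auto intro!: continuous_intros DERIV_divide)
qed

lemma C1r_sqrt: "C1r I f \<Longrightarrow> (\<And>t. t \<in> I \<Longrightarrow> f t > 0) \<Longrightarrow> C1r I (\<lambda>t. sqrt (f t))"
proof -
  assume cf: "C1r I f" and pos: "\<And>t. t \<in> I \<Longrightarrow> f t > 0"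
  have ff: "continuous_on I f" using cf C1r_cont by auto
  obtain f' where a1: "continuous_on I f'" "\<forall>t\<in>I. (f has_real_derivative f' t) (at t)" using cf unfolding C1r_def by blast
  have d: "((\<lambda>t. sqrt (f t)) has_real_derivative inverse (sqrt (f t)) / 2 * f' t) (at t)" if "t \<in> I" for t
    using DERIV_chain2[OF DERIV_real_sqrt[OF pos[OF that]] a1(2)[rule_format, OF that]] .
  have c: "continuous_on I (\<lambda>t. inverse (sqrt (f t)) / 2 * f' t)"
    using a1(1) ff pos by (auto intro!: continuous_intros simp: less_imp_neq[symmetric])
  show ?thesis unfolding C1r_def using d c by blast
qed

definition C1t :: "real set \<Rightarrow> (real \<Rightarrow> R3) \<Rightarrow> bool" where
  "C1t I p \<longleftrightarrow> C1r I (\<lambda>t. fst (p t)) \<and> C1r I (\<lambda>t. fst (snd (p t))) \<and> C1r I (\<lambda>t. snd (snd (p t)))"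

lemma C1t_add: "C1t I p \<Longrightarrow> C1t I q \<Longrightarrow> C1t I (\<lambda>t. p t + q t)"
  unfolding C1t_def by (simp add: C1r_add)
lemma C1t_diff: "C1t I p \<Longrightarrow> C1t I q \<Longrightarrow> C1t I (\<lambda>t. p t - q t)"
  unfolding C1t_def by (simp add: C1r_diff)
lemma C1t_scale: "C1r I s \<Longrightarrow> C1t I p \<Longrightarrow> C1t I (\<lambda>t. s t *\<^sub>R p t)"
  unfolding C1t_def by (simp add: C1r_mult)
lemma C1r_lor: "C1t I p \<Longrightarrow> C1t I q \<Longrightarrow> C1r I (\<lambda>t. lor (p t) (q t))"
  unfolding C1t_def lor_def by (intro C1r_diff C1r_add C1r_mult) auto
lemma C1t_crossL: "C1t I p \<Longrightarrow> C1t I q \<Longrightarrow> C1t I (\<lambda>t. crossL (p t) (q t))"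
  unfolding C1t_def crossL_def by (simp add: C1r_diff C1r_mult)

lemma C1t_vd:
  assumes "C1t I p"
  shows "\<exists>p'. continuous_on I p' \<and> (\<forall>t\<in>I. (p has_vector_derivative p' t) (at t))"
proof -
  obtain f1 where a1: "continuous_on I f1" "\<forall>t\<in>I. ((\<lambda>t. fst (p t)) has_real_derivative f1 t) (at t)"
    using assms unfolding C1t_def C1r_def by blast
  obtain f2 where a2: "continuous_on I f2" "\<forall>t\<in>I. ((\<lambda>t. fst (snd (p t))) has_real_derivative f2 t) (at t)"
    using assms unfolding C1t_def C1r_def by blast
  obtain f3 where a3: "continuous_on I f3" "\<forall>t\<in>I. ((\<lambda>t. snd (snd (p t))) has_real_derivative f3 t) (at t)"
    using assms unfolding C1t_def C1r_def by blast
  have "continuous_on I (\<lambda>t. (f1 t, f2 t, f3 t))" using a1 a2 a3 by (intro continuous_on_Pair) auto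
  moreover have "((\<lambda>t. (fst (p t), fst (snd (p t)), snd (snd (p t)))) has_vector_derivative (f1 t, f2 t, f3 t)) (at t)"
    if "t \<in> I" for t
    using a1(2) a2(2) a3(2) that
    by (intro has_vector_derivative_Pair) (auto simp: has_real_derivative_iff_has_vector_derivative)
  ultimately show ?thesis by (intro exI[of _ "\<lambda>t. (f1 t, f2 t, f3 t)"]) simp
qed

lemma C1t_D:
  assumes "\<And>t. t \<in> I \<Longrightarrow> (f has_vector_derivative f' t) (at t)" "continuous_on I f'"
  shows "C1t I f"
proof -
  have "C1r I (\<lambda>t. comp3 i (f t))" for i
    unfolding C1r_def
  proof (intro exI[of _ "\<lambda>t. comp3 i (f' t)"] conjI ballI)
    show "continuous_on I (\<lambda>t. comp3 i (f' t))"
      by (rule continuous_on_compose2[OF linear_continuous_on[OF bounded_linear_comp3] assms(2)]) (rule subset_UNIV)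
    fix t assume "t \<in> I"
    then show "((\<lambda>t. comp3 i (f t)) has_real_derivative comp3 i (f' t)) (at t)" using comp3_hvd[OF assms(1)] by blast
  qed
  then have "C1r I (\<lambda>t. comp3 1 (f t))" "C1r I (\<lambda>t. comp3 2 (f t))" "C1r I (\<lambda>t. comp3 3 (f t))" by auto
  then show ?thesis unfolding C1t_def by (simp_all add: comp3_def)
qed

lemma open_interval_einterval:
  fixes I :: "real set"
  assumes "open I" "is_interval I" "I \<noteq> {}"
  shows "\<exists>l r. l < r \<and> I = einterval l r"
proof -
  define l where "l = Inf (ereal ` I)"
  define r where "r = Sup (ereal ` I)"
  have lo: "l < ereal x" if x: "x \<in> I" for x
  proof -
    obtain e where e: "e > 0" "ball x e \<subseteq> I" using assms(1) x open_contains_ball by blast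
    have "x - e/2 \<in> I" using e by (auto simp: dist_real_def)
    then have "l \<le> ereal (x - e/2)" unfolding l_def by (rule INF_lower)
    also have "\<dots> < ereal x" using e by simp
    finally show ?thesis .
  qed
  have hi: "ereal x < r" if x: "x \<in> I" for x
  proof -
    obtain e where e: "e > 0" "ball x e \<subseteq> I" using assms(1) x open_contains_ball by blast
    have "x + e/2 \<in> I" using e by (auto simp: dist_real_def)
    have "ereal x < ereal (x + e/2)" using e by simp
    also have "\<dots> \<le> r" unfolding r_def using \<open>x + e/2 \<in> I\<close> by (rule SUP_upper)
    finally show ?thesis .
  qed
  have "I = einterval l r"
  proof
    show "I \<subseteq> einterval l r" using lo hi by (auto simp: einterval_def)
    show "einterval l r \<subseteq> I"
    proof
      fix x assume "x \<in> einterval l r"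
      then have h: "l < ereal x" "ereal x < r" by (auto simp: einterval_def)
      obtain y where y: "y \<in> I" "ereal y < ereal x" using h(1) unfolding l_def Inf_less_iff by blast
      obtain z where z: "z \<in> I" "ereal x < ereal z" using h(2) unfolding r_def less_Sup_iff by blast
      show "x \<in> I" using mem_is_interval_1_I[OF assms(2) y(1) z(1)] y(2) z(2) by simp
    qed
  qed
  moreover obtain x where "x \<in> I" using assms(3) by blast
  then have "l < r" using lo hi by (meson less_trans)
  ultimately show ?thesis by blast
qed

lemma antideriv:
  fixes I :: "real set" and w :: "real \<Rightarrow> R3"
  assumes "open I" "is_interval I" "I \<noteq> {}" "continuous_on I w"
  shows "\<exists>W. \<forall>t\<in>I. (W has_vector_derivative w t) (at t)"
proof -
  obtain l r where lr: "l < r" "I = einterval l r" using open_interval_einterval[OF assms(1-3)] by blast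
  have "\<And>x. l < x \<Longrightarrow> x < r \<Longrightarrow> isCont w x"
  proof -
    fix x :: real assume "l < x" "x < r"
    then have "x \<in> I" using lr by (simp add: einterval_def)
    then show "isCont w x" using assms(1,4) continuous_on_eq_continuous_at by blast
  qed
  then obtain W where "\<forall>x::real. l < x \<longrightarrow> x < r \<longrightarrow> (W has_vector_derivative w x) (at x)"
    using einterval_antiderivative[OF lr(1)] by blast
  then show ?thesis using lr by (auto simp: einterval_def)
qed

locale curvectx =
  fixes I :: "real set" and D :: "nat \<Rightarrow> real \<Rightarrow> R3"
  assumes I: "open I" "is_interval I" "I \<noteq> {}"
    and dD: "\<And>n t. t \<in> I \<Longrightarrow> (D n has_vector_derivative D (Suc n) t) (at t)"
    and TT: "\<And>t. t \<in> I \<Longrightarrow> lor (D 1 t) (D 1 t) < 0"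
    and AA: "\<And>t. t \<in> I \<Longrightarrow> lor (D 2 t) (D 2 t) > 0"
begin

lemma cD: "continuous_on I (D n)" using dD by (rule hvd_cont_on)
lemma C1D: "C1t I (D n)" by (rule C1t_D[OF dD cD])

definition mu :: "real \<Rightarrow> real" where "mu t = lor (D 2 t) (D 1 t) / lor (D 1 t) (D 1 t)"
definition PP :: "real \<Rightarrow> R3" where "PP t = D 2 t - mu t *\<^sub>R D 1 t"
definition ww :: "real \<Rightarrow> R3" where "ww t = (1 / sqrt (lor (PP t) (PP t))) *\<^sub>R crossL (PP t) (D 1 t)"
definition aa :: "real \<Rightarrow> R3" where "aa t = (1/2) *\<^sub>R (D 1 t + ww t)"
definition bb :: "real \<Rightarrow> R3" where "bb t = (1/2) *\<^sub>R (D 1 t - ww t)"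

lemma PT: "t \<in> I \<Longrightarrow> lor (PP t) (D 1 t) = 0"
  using TT[of t] by (simp add: PP_def mu_def lor_lin)

lemma PPpos: "t \<in> I \<Longrightarrow> lor (PP t) (PP t) > 0"
proof -
  assume t: "t \<in> I"
  have n: "lor (D 1 t) (D 1 t) \<noteq> 0" using TT[OF t] by simp
  have "lor (PP t) (PP t) = lor (PP t) (D 2 t) - mu t * lor (PP t) (D 1 t)"
    by (simp add: PP_def lor_lin)
  also have "\<dots> = lor (PP t) (D 2 t)" using PT[OF t] by simp
  also have "\<dots> = lor (D 2 t) (D 2 t) - mu t * lor (D 1 t) (D 2 t)" by (simp add: PP_def lor_lin)
  also have "\<dots> = lor (D 2 t) (D 2 t) - (lor (D 2 t) (D 1 t))^2 / lor (D 1 t) (D 1 t)"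
    using lor_sym[of "D 1 t" "D 2 t"] by (simp add: mu_def power2_eq_square)
  finally have e: "lor (PP t) (PP t) = lor (D 2 t) (D 2 t) - (lor (D 2 t) (D 1 t))^2 / lor (D 1 t) (D 1 t)" .
  have "(lor (D 2 t) (D 1 t))^2 / lor (D 1 t) (D 1 t) \<le> 0"
    using TT[OF t] by (simp add: divide_nonneg_neg)
  then show ?thesis using e AA[OF t] by linarith
qed

lemma C1mu: "C1r I mu"
  unfolding mu_def[abs_def] using TT by (intro C1r_divide C1r_lor C1D) force
lemma C1P: "C1t I PP"
  unfolding PP_def[abs_def] by (intro C1t_diff C1t_scale C1mu C1D)
lemma C1w: "C1t I ww"
  unfolding ww_def[abs_def]
  by (intro C1t_scale C1r_divide C1r_const C1r_sqrt C1r_lor C1P C1t_crossL C1D)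
     (use PPpos in \<open>auto simp: less_imp_neq[symmetric]\<close>)
lemma C1a: "C1t I aa" unfolding aa_def[abs_def] by (intro C1t_scale C1r_const C1t_add C1D C1w)
lemma C1b: "C1t I bb" unfolding bb_def[abs_def] by (intro C1t_scale C1r_const C1t_diff C1D C1w)

lemma wT: "lor (ww t) (D 1 t) = 0" by (simp add: ww_def lor_lin crossL_orth2)
lemma wP: "lor (ww t) (PP t) = 0" by (simp add: ww_def lor_lin crossL_orth1)
lemma ww_norm: "t \<in> I \<Longrightarrow> lor (ww t) (ww t) = - lor (D 1 t) (D 1 t)"
proof -
  assume t: "t \<in> I"
  have p: "lor (PP t) (PP t) > 0" using PPpos[OF t] .
  have "lor (ww t) (ww t) = (1 / sqrt (lor (PP t) (PP t)))^2 * lor (crossL (PP t) (D 1 t)) (crossL (PP t) (D 1 t))"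
    by (simp add: ww_def lor_lin power2_eq_square)
  also have "\<dots> = (1 / lor (PP t) (PP t)) * ((lor (PP t) (D 1 t))^2 - lor (PP t) (PP t) * lor (D 1 t) (D 1 t))"
    using p by (simp add: crossL_norm power_divide)
  also have "\<dots> = - lor (D 1 t) (D 1 t)" using p PT[OF t] by simp
  finally show ?thesis .
qed

lemma aa_null: "t \<in> I \<Longrightarrow> lor (aa t) (aa t) = 0"
  using ww_norm[of t] wT[of t] lor_sym[of "D 1 t" "ww t"] by (simp add: aa_def lor_lin)
lemma bb_null: "t \<in> I \<Longrightarrow> lor (bb t) (bb t) = 0"
  using ww_norm[of t] wT[of t] lor_sym[of "D 1 t" "ww t"] by (simp add: bb_def lor_lin)
lemma ab_neg: "t \<in> I \<Longrightarrow> lor (aa t) (bb t) < 0"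
  using ww_norm[of t] wT[of t] lor_sym[of "D 1 t" "ww t"] TT[of t] by (simp add: aa_def bb_def lor_lin)
lemma Pa: "t \<in> I \<Longrightarrow> lor (PP t) (aa t) = 0"
  using PT[of t] wP[of t] lor_sym[of "PP t" "ww t"] by (simp add: aa_def lor_lin)
lemma Pb: "t \<in> I \<Longrightarrow> lor (PP t) (bb t) = 0"
  using PT[of t] wP[of t] lor_sym[of "PP t" "ww t"] by (simp add: bb_def lor_lin)

lemma main_surf:
  "\<exists>al be a b a' b'. surf I al be a b a' b' \<and> (\<forall>t\<in>I. al t + be t = D 0 t \<and> a t = aa t \<and> b t = bb t)"
proof -
  obtain a' where a': "continuous_on I a'" "\<forall>t\<in>I. (aa has_vector_derivative a' t) (at t)"
    using C1t_vd[OF C1a] by blast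
  obtain b' where b': "continuous_on I b'" "\<forall>t\<in>I. (bb has_vector_derivative b' t) (at t)"
    using C1t_vd[OF C1b] by blast
  obtain w' where w': "continuous_on I w'" "\<forall>t\<in>I. (ww has_vector_derivative w' t) (at t)"
    using C1t_vd[OF C1w] by blast
  have cw: "continuous_on I ww" using w'(2) by (intro hvd_cont_on) blast
  obtain W where W: "\<forall>t\<in>I. (W has_vector_derivative ww t) (at t)" using antideriv[OF I cw] by blast
  define al where "al t = (1/2) *\<^sub>R (D 0 t + W t)" for t
  define be where "be t = (1/2) *\<^sub>R (D 0 t - W t)" for t
  have bl: "bounded_linear (\<lambda>x::R3. (1/2::real) *\<^sub>R x)" by (rule bounded_linear_scaleR_right)
  have dal: "(al has_vector_derivative aa t) (at t)" if "t \<in> I" for t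
  proof -
    have "((\<lambda>t. D 0 t + W t) has_vector_derivative D (Suc 0) t + ww t) (at t)"
      by (rule has_vector_derivative_add[OF dD[OF that] W[rule_format, OF that]])
    then show ?thesis
      using bounded_linear.has_vector_derivative[OF bl] unfolding al_def[abs_def] aa_def by simp
  qed
  have dbe: "(be has_vector_derivative bb t) (at t)" if "t \<in> I" for t
  proof -
    have "((\<lambda>t. D 0 t - W t) has_vector_derivative D (Suc 0) t - ww t) (at t)"
      by (rule has_vector_derivative_diff[OF dD[OF that] W[rule_format, OF that]])
    then show ?thesis
      using bounded_linear.has_vector_derivative[OF bl] unfolding be_def[abs_def] bb_def by simp
  qed
  have "surf I al be aa bb a' b'"
  proof (rule surf.intro)
    show "open I" "is_interval I" using I by auto
    show "\<And>t. t \<in> I \<Longrightarrow> (al has_vector_derivative aa t) (at t)" by (rule dal)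
    show "\<And>t. t \<in> I \<Longrightarrow> (be has_vector_derivative bb t) (at t)" by (rule dbe)
    show "\<And>t. t \<in> I \<Longrightarrow> (aa has_vector_derivative a' t) (at t)" using a'(2) by blast
    show "\<And>t. t \<in> I \<Longrightarrow> (bb has_vector_derivative b' t) (at t)" using b'(2) by blast
    show "continuous_on I a'" "continuous_on I b'" by (rule a'(1), rule b'(1))
    show "\<And>t. t \<in> I \<Longrightarrow> lor (aa t) (aa t) = 0" by (rule aa_null)
    show "\<And>t. t \<in> I \<Longrightarrow> lor (bb t) (bb t) = 0" by (rule bb_null)
    show "\<And>t. t \<in> I \<Longrightarrow> lor (aa t) (bb t) < 0" by (rule ab_neg)
  qed
  moreover have "\<forall>t\<in>I. al t + be t = D 0 t"
  proof
    fix t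
    have "al t + be t = (1/2) *\<^sub>R ((D 0 t + W t) + (D 0 t - W t))"
      by (simp only: al_def be_def scaleR_add_right)
    also have "\<dots> = D 0 t" by (simp add: scaleR_2[symmetric])
    finally show "al t + be t = D 0 t" .
  qed
  ultimately show ?thesis by blast
qed

end

theorem corollary2p2:
  fixes I :: "real set" and c :: "real \<Rightarrow> real \<times> real \<times> real"
  assumes "open I" and "is_interval I" and "I \<noteq> {}"
    and "smooth_curve I c"
    and "\<forall>t\<in>I. lor (vel c t) (vel c t) < 0"
    and "\<forall>t\<in>I. lor (acc c t) (acc c t) > 0"
  shows "\<exists>S. BI_general_surface S \<and> geodesic_on S I c"
proof -
  obtain D where D0: "D 0 = c" and dD: "\<And>n t. t \<in> I \<Longrightarrow> (D n has_vector_derivative D (Suc n) t) (at t)"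
    using assms(4) unfolding smooth_curve_def by blast
  have vel: "vel c t = D 1 t" if t: "t \<in> I" for t
    unfolding vel_def using vector_derivative_at[OF dD[OF t, of 0]] D0 by simp
  have acc: "acc c t = D 2 t" if t: "t \<in> I" for t
  proof -
    have "(vel c has_vector_derivative D (Suc 1) t) (at t)"
      by (rule has_vector_derivative_transform_within_open[OF dD[OF t, of 1] assms(1) t]) (simp add: vel)
    then show ?thesis unfolding acc_def using vector_derivative_at by (simp add: numeral_2_eq_2)
  qed
  interpret CV: curvectx I D
  proof (unfold_locales)
    show "open I" "is_interval I" "I \<noteq> {}" using assms(1-3) by auto
    show "\<And>n t. t \<in> I \<Longrightarrow> (D n has_vector_derivative D (Suc n) t) (at t)" by (rule dD)
    show "\<And>t. t \<in> I \<Longrightarrow> lor (D 1 t) (D 1 t) < 0" using assms(5) vel by auto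
    show "\<And>t. t \<in> I \<Longrightarrow> lor (D 2 t) (D 2 t) > 0" using assms(6) acc by auto
  qed
  obtain al be a b a' b' where su: "surf I al be a b a' b'"
    and eqs: "\<forall>t\<in>I. al t + be t = D 0 t \<and> a t = CV.aa t \<and> b t = CV.bb t"
    using CV.main_surf by blast
  interpret S: surf I al be a b a' b' by (rule su)
  have geo: "geodesic_on S.SS I c"
    unfolding geodesic_on_def
  proof (intro ballI conjI allI impI)
    fix t assume t: "t \<in> I"
    have ct: "c t = S.X (t, t)" using eqs t D0 by (simp add: S.X_def)
    show "c t \<in> S.SS" using S.diag_SS[OF t] ct by simp
    fix V k U \<psi> q
    assume ch: "BI_chart S.SS V k U \<psi>" and cV: "c t \<in> V" and q: "q \<in> U" and gq: "graph_pt k \<psi> q = c t"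
    have o: "lor (graph_normal k \<psi> q) (a t) = 0 \<and> lor (graph_normal k \<psi> q) (b t) = 0"
      using S.geod_orth[OF t ch q] gq ct by simp
    have pn: "prin_normal c t = CV.PP t"
      unfolding prin_normal_def CV.PP_def CV.mu_def using vel[OF t] acc[OF t] by simp
    have ab: "lor (a t) (b t) \<noteq> 0" using S.ab[OF t] by simp
    have Pa: "lor (CV.PP t) (a t) = 0" using CV.Pa[OF t] eqs t by simp
    have Pb: "lor (CV.PP t) (b t) = 0" using CV.Pb[OF t] eqs t by simp
    show "\<exists>l. prin_normal c t = l *\<^sub>R graph_normal k \<psi> q"
      unfolding pn using parallel_normal[OF ab S.aa[OF t] S.bb[OF t] Pa Pb _ _ gn_nz] o by blast
  qed
  show ?thesis using S.SS_general geo by blast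
qed

end
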